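(* Let $\theta=0.038526551295994$ and $\Delta=0.319418991002646$, and let $M=100$. Let $\beta_2=\frac{2-6\Delta}{1-2\Delta}$, $\beta_i=2\theta(i+1)$ for $3\le i\le 11$, and $\beta_i=1$ for $12\le i\le 100$. The online algorithm described in the context with these parameters has asymptotic competitive ratio at most $1.44465$ for online Ordered Open End Bin Packing restricted to inputs without $1$-items (all item sizes strictly below $1$).
   Context: Online Ordered Open End Bin Packing: items with sizes in $(0,1)$ (no item of size $1$) arrive one by one; each is irrevocably assigned upon arrival to a bin whose current total size is strictly below $1$ (possibly a new bin). Cost = number of bins. $\mathrm{OPT}(I)$ is the minimum number of bins of an offline packing of the sequence $I$ obeying the same order-based rule. The asymptotic competitive ratio of $\mathrm{ALG}$ is $\limsup_{k\to\infty}\sup\{\mathrm{ALG}(I)/\mathrm{OPT}(I):\mathrm{OPT}(I)\ge k\}$. The algorithm (with $M=100$ and parameters $\beta_2,\dots,\beta_M\in[0,1]$): for $1\le i\le M-1$, class $i$ consists of items of sizes in $[\frac1{i+1},\frac1i)$; class $M$ consists of items of sizes in $(0,\frac1M)$. Bins of classes $i\ge2$ are large or small and active or inactive; inactive small bins are ready (have not received a class-$1$ item) or used. For $2\le i\le M-1$ a large bin is planned to contain $i+1$ items of class $i$ and a small bin $i$ items. Actions: (a) When an item of class $1$ arrives: if a ready bin exists, pack it into one (it becomes used); otherwise, if there is a bin containing exactly one item, which is of class $1$ (opened for a class-$1$ item), pack it there; otherwise pack it into a new bin. (b) When an item of class $i$, $2\le i\le M$, arrives: if there is an active bin of class $i$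 (there is at most one), pack it there. Otherwise let $n_i$ be the current number of bins of class $i$ and $n_i^s$ the number of small ones; if $n_i^s\le\beta_i n_i$ open a new small active bin of class $i$, else a new large active bin of class $i$, and pack the item into it. Then for $i\le M-1$: if the bin has its planned number of items ($i+1$ if large, $i$ if small) it becomes inactive, and if small it becomes ready. For $i=M$: a large bin becomes inactive once its total size is at least $1$; a small bin becomes inactive (and ready) once its total size exceeds $1-\frac1M$. *)

theory Defs
  imports Complex_Main "HOL-Library.Extended_Real" "HOL-Library.Liminf_Limsup"
begin

definition M :: nat where "M = 100"

definition theta :: real where "theta = 0.038526551295994"
definition Delta :: real where "Delta = 0.319418991002646"

text \<open>The parameters beta_i of the theorem (beta_i only matters for 2 <= i <= M).\<close>
definition beta_paper :: "nat \<Rightarrow> real" where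
  "beta_paper i =
     (if i = 2 then (2 - 6 * Delta) / (1 - 2 * Delta)
      else if 3 \<le> i \<and> i \<le> 11 then 2 * theta * real (i + 1)
      else if 12 \<le> i \<and> i \<le> 100 then 1
      else 0)"

definition item_class :: "real \<Rightarrow> nat" where
  "item_class x = (if x < 1 / real M then M
     else (THE i. 1 \<le> i \<and> i \<le> M - 1 \<and> 1 / real (i + 1) \<le> x \<and> x < 1 / real i))"

text \<open>A bin records its class (1 for bins opened for a class-1 item), whether it is
  small (else large), active, used (a small bin that received a class-1 item),
  and its contents in packing order.\<close>
record bin =
  bcls :: nat
  bsmall :: bool
  bactive :: bool
  bused :: bool
  bitems :: "real list"

definition ready :: "bin \<Rightarrow> bool" where
  "ready b \<longleftrightarrow> 2 \<le> bcls b \<and> bsmall b \<and> \<not> bactive b \<and> \<not> bused b"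

definition full :: "bin \<Rightarrow> bool" where
  "full b \<longleftrightarrow>
     (if bcls b \<le> M - 1 then
        length (bitems b) = (if bsmall b then bcls b else bcls b + 1)
      else if bsmall b then sum_list (bitems b) > 1 - 1 / real M
      else sum_list (bitems b) \<ge> 1)"

definition close_bin :: "bin \<Rightarrow> bin" where
  "close_bin b = b\<lparr>bactive := bactive b \<and> \<not> full b\<rparr>"

definition add_item :: "real \<Rightarrow> bin \<Rightarrow> bin" where
  "add_item x b = b\<lparr>bitems := bitems b @ [x]\<rparr>"

text \<open>One step of the algorithm (nondeterministic where the description leaves a
  choice, e.g. which ready bin receives a class-1 item).\<close>
inductive alg_step :: "(nat \<Rightarrow> real) \<Rightarrow> bin list \<Rightarrow> real \<Rightarrow> bin list \<Rightarrow> bool"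
  for beta :: "nat \<Rightarrow> real" where
  class1_ready:
    "\<lbrakk> item_class x = 1; j < length B; ready (B ! j) \<rbrakk> \<Longrightarrow>
     alg_step beta B x (B[j := (add_item x (B ! j))\<lparr>bused := True\<rparr>])"
| class1_pair:
    "\<lbrakk> item_class x = 1; \<not> (\<exists>b\<in>set B. ready b); j < length B;
       bcls (B ! j) = 1; length (bitems (B ! j)) = 1 \<rbrakk> \<Longrightarrow>
     alg_step beta B x (B[j := add_item x (B ! j)])"
| class1_new:
    "\<lbrakk> item_class x = 1; \<not> (\<exists>b\<in>set B. ready b);
       \<not> (\<exists>b\<in>set B. bcls b = 1 \<and> length (bitems b) = 1) \<rbrakk> \<Longrightarrow>
     alg_step beta B x (B @ [\<lparr>bcls = 1, bsmall = False, bactive = False, bused = False,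
                              bitems = [x]\<rparr>])"
| classi_active:
    "\<lbrakk> item_class x = i; 2 \<le> i; j < length B; bcls (B ! j) = i; bactive (B ! j) \<rbrakk> \<Longrightarrow>
     alg_step beta B x (B[j := close_bin (add_item x (B ! j))])"
| classi_new:
    "\<lbrakk> item_class x = i; 2 \<le> i; \<not> (\<exists>b\<in>set B. bcls b = i \<and> bactive b) \<rbrakk> \<Longrightarrow>
     alg_step beta B x
       (B @ [close_bin \<lparr>bcls = i,
                 bsmall = (real (length (filter (\<lambda>b. bcls b = i \<and> bsmall b) B))
                           \<le> beta i * real (length (filter (\<lambda>b. bcls b = i) B))),
                 bactive = True, bused = False, bitems = [x]\<rparr>])"

inductive alg_run :: "(nat \<Rightarrow> real) \<Rightarrow> real list \<Rightarrow> bin list \<Rightarrow> bool"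
  for beta :: "nat \<Rightarrow> real" where
  run_nil: "alg_run beta [] []"
| run_snoc: "\<lbrakk> alg_run beta I B; alg_step beta B x B' \<rbrakk> \<Longrightarrow> alg_run beta (I @ [x]) B'"

definition valid_input :: "real list \<Rightarrow> bool" where
  "valid_input I \<longleftrightarrow> (\<forall>x\<in>set I. 0 < x \<and> x < 1)"

text \<open>An assignment f of item indices to bin labels is a valid ordered open-end
  packing if each item goes into a bin whose current load (items before it) is below 1.\<close>
definition valid_packing :: "real list \<Rightarrow> (nat \<Rightarrow> nat) \<Rightarrow> bool" where
  "valid_packing I f \<longleftrightarrow>
     (\<forall>j < length I. (\<Sum>k \<in> {k. k < j \<and> f k = f j}. I ! k) < 1)"

definition OPT :: "real list \<Rightarrow> nat" where
  "OPT I = (LEAST m. \<exists>f. valid_packing I f \<and> card (f ` {..<length I}) = m)"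

definition asymp_ratio :: "(nat \<Rightarrow> real) \<Rightarrow> ereal" where
  "asymp_ratio beta =
     limsup (\<lambda>k. SUP (I, B) \<in> {(I, B). valid_input I \<and> alg_run beta I B \<and> OPT I \<ge> k}.
                   ereal (real (length B) / real (OPT I)))"

end

theory Submission
  imports Defs "HOL-Library.Multiset"
begin

lemma item_class_props:
  assumes "0 < x" "x < 1"
  shows "1 \<le> item_class x \<and> item_class x \<le> 100 \<and> (item_class x = 100 \<longleftrightarrow> x < 1/100)
    \<and> (item_class x \<le> 99 \<longrightarrow> 1 / real (item_class x + 1) \<le> x \<and> x < 1 / real (item_class x))"
proof (cases "x < 1/100")
  case True then show ?thesis by (simp add: item_class_def M_def)
next
  case False
  define i where "i = nat (ceiling (1/x)) - 1"
  have c1: "1/x > 1" using assms by simp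
  have c2: "1/x \<le> 100" using False assms by (simp add: field_simps)
  have ci: "ceiling (1/x) \<ge> 2" using c1 by linarith
  have ci2: "ceiling (1/x) \<le> 100" using c2 by linarith
  have ir: "real i = real_of_int (ceiling (1/x)) - 1"
  proof -
    have "nat (ceiling (1/x)) \<ge> 1" using ci by linarith
    then have "real i = real (nat (ceiling (1/x))) - 1" unfolding i_def by (simp add: of_nat_diff)
    then show ?thesis using ci by simp
  qed
  have r1: "1 \<le> real i" "real i \<le> 99" using ir ci ci2 by linarith+
  have i1: "1 \<le> i" "i \<le> 99" using r1 by simp_all
  have a1: "real i < 1/x" using ir by linarith
  have a2: "1/x \<le> real i + 1" using ir by linarith
  have P: "1 / real (i + 1) \<le> x \<and> x < 1 / real i"
  proof
    show "1 / real (i + 1) \<le> x" using a2 assms by (simp add: field_simps)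
    show "x < 1 / real i" using a1 assms i1 by (simp add: field_simps)
  qed
  have U: "j = i" if "1 \<le> j" "j \<le> M - 1" "1 / real (j + 1) \<le> x" "x < 1 / real j" for j
  proof -
    have "real j < 1/x" using that assms by (simp add: field_simps)
    moreover have "1/x \<le> real j + 1" using that assms by (simp add: field_simps)
    ultimately show ?thesis using a1 a2 by linarith
  qed
  have "item_class x = i"
  proof -
    have "(THE j. 1 \<le> j \<and> j \<le> M - 1 \<and> 1 / real (j + 1) \<le> x \<and> x < 1 / real j) = i"
    proof (rule the_equality)
      show "1 \<le> i \<and> i \<le> M - 1 \<and> 1 / real (i + 1) \<le> x \<and> x < 1 / real i"
        using i1 P by (simp add: M_def)
      show "\<And>j. 1 \<le> j \<and> j \<le> M - 1 \<and> 1 / real (j + 1) \<le> x \<and> x < 1 / real j \<Longrightarrow> j = i"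
        using U by blast
    qed
    moreover have "\<not> x < 1 / real M" using False by (simp add: M_def)
    ultimately show ?thesis unfolding item_class_def by simp
  qed
  then show ?thesis using i1 P False by auto
qed

definition vA :: "nat \<Rightarrow> real" where
  "vA i = (if i = 1 then 0.5 else if i = 2 then 0.319418991003 else if i = 3 then 0.2291285114 else if i = 4 then 0.17495421368 else if i = 5 then 0.1388380152 else if i = 6 then 0.113040730571 else if i = 7 then 0.0936927671 else if i = 8 then 0.078644351067 else if i = 9 then 0.06660561824 else if i = 10 then 0.056755745927 else if i = 11 then 0.048547519 else 0)"

definition hb :: "real \<Rightarrow> real" where
  "hb r = (if r \<le> 1/42 then 43/84 * r else 13/24 * r)"

lemma set11: "{1..11::nat} = {1,2,3,4,5,6,7,8,9,10,11}" by (auto simp: numeral_eq_Suc le_Suc_eq)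

lemma enum3s: "\<forall>i1\<in>{1..11::nat}. \<forall>i2\<in>{1..11::nat}. \<forall>i3\<in>{1..11::nat}.
   i3 \<le> i2 \<longrightarrow> i2 \<le> i1 \<longrightarrow> 1/real(i1+1) + 1/real(i2+1) + 1/real(i3+1) < 1 \<longrightarrow>
   vA i1 + vA i2 + vA i3 + hb (1 - (1/real(i1+1) + 1/real(i2+1) + 1/real(i3+1))) \<le> 1.44465 - 1/2"
  unfolding set11 by (simp add: vA_def hb_def)

lemma enum2: "\<forall>i1\<in>{1..11::nat}. \<forall>i2\<in>{1..11::nat}.
   1/real(i1+1) + 1/real(i2+1) < 1 \<longrightarrow>
   vA i1 + vA i2 + hb (1 - (1/real(i1+1) + 1/real(i2+1))) \<le> 1.44465 - 1/2"
  unfolding set11 by (simp add: vA_def hb_def)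

lemma enum1: "\<forall>i1\<in>{1..11::nat}.
   1/real(i1+1) < 1 \<longrightarrow>
   vA i1 + hb (1 - (1/real(i1+1))) \<le> 1.44465 - 1/2"
  unfolding set11 by (simp add: vA_def hb_def)

definition wAc :: "nat \<Rightarrow> real" where
  "wAc i = (if i = 1 then 1/2 else (1 - beta_paper i / 2) / (real i + 1 - beta_paper i))"
definition wBc :: "nat \<Rightarrow> real" where
  "wBc i = (if i = 1 then 0 else 1 / (real i + 1 - beta_paper i))"
definition wA :: "real \<Rightarrow> real" where
  "wA x = (if item_class x = 100 then x * (50/99) else wAc (item_class x))"
definition wB :: "real \<Rightarrow> real" where
  "wB x = (if item_class x = 100 then x * (100/99) else wBc (item_class x))"

lemma beta_big: "12 \<le> i \<Longrightarrow> i \<le> 100 \<Longrightarrow> beta_paper i = 1"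
  by (simp add: beta_paper_def)

lemma wc_big: assumes "12 \<le> i" "i \<le> 100" shows "wAc i = 1 / (2 * real i)" "wBc i = 1 / real i"
  using assms by (simp_all add: wAc_def wBc_def beta_big)

lemma set11': "i \<in> {1..11::nat} \<longleftrightarrow> i = 1 \<or> i = 2 \<or> i = 3 \<or> i = 4 \<or> i = 5 \<or> i = 6 \<or> i = 7 \<or> i = 8 \<or> i = 9 \<or> i = 10 \<or> i = 11"
  using set11 by auto

lemma wAc_vA: "1 \<le> i \<Longrightarrow> i \<le> 11 \<Longrightarrow> wAc i \<le> vA i"
  using set11'[of i]
  by (auto simp: wAc_def vA_def beta_paper_def theta_def Delta_def)

lemma wAc_lin: "1 \<le> i \<Longrightarrow> i \<le> 11 \<Longrightarrow> wAc i \<le> (1 / real (i+1) - theta) / (1 - 2 * theta)"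
  using set11'[of i]
  by (auto simp: wAc_def beta_paper_def theta_def Delta_def)

lemma wA_small:
  assumes "0 < x" "x < 1/12"
  shows "0 \<le> wA x \<and> wA x \<le> 13/24 * x \<and> (x < 1/42 \<longrightarrow> wA x \<le> 43/84 * x)"
proof -
  have x1: "x < 1" using assms by simp
  note P = item_class_props[OF assms(1) x1]
  show ?thesis
  proof (cases "item_class x = 100")
    case True then show ?thesis using assms by (simp add: wA_def)
  next
    case False
    define i where "i = item_class x"
    have i99: "i \<le> 99" "1 \<le> i" using P False unfolding i_def by auto
    have lo: "1 / real (i+1) \<le> x" and hi: "x < 1 / real i" using P i99 unfolding i_def by auto
    have "real i + 1 > 12"
    proof -
      have "1 / real (i+1) < 1/12" using lo assms by linarith
      then show ?thesis by (simp add: field_simps)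
    qed
    then have i12: "12 \<le> i" by linarith
    have w: "wA x = 1 / (2 * real i)" using False i12 i99 unfolding wA_def i_def[symmetric]
      by (simp add: wc_big)
    have A: "1 / (2 * real i) \<le> 13/24 * (1 / real (i+1))"
      using i12 by (simp add: field_simps)
    have B: "13/24 * (1 / real (i+1)) \<le> 13/24 * x" using lo by (intro mult_left_mono) auto
    have C: "x < 1/42 \<longrightarrow> wA x \<le> 43/84 * x"
    proof
      assume "x < 1/42"
      then have "1 / real (i+1) < 1/42" using lo by linarith
      then have "real i + 1 > 42" by (simp add: field_simps)
      then have "1 / (2 * real i) \<le> 43/84 * (1 / real (i+1))" by (simp add: field_simps)
      moreover have "43/84 * (1 / real (i+1)) \<le> 43/84 * x" using lo by (intro mult_left_mono) auto
      ultimately show "wA x \<le> 43/84 * x" using w by linarith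
    qed
    show ?thesis using w A B C i12 by simp
  qed
qed

lemma wA_large:
  assumes "1/12 \<le> x" "x < 1"
  shows "\<exists>i. 1 \<le> i \<and> i \<le> 11 \<and> item_class x = i \<and> wA x = wAc i \<and> 1 / real (i+1) \<le> x"
proof -
  have x0: "0 < x" using assms by simp
  note P = item_class_props[OF x0 assms(2)]
  define i where "i = item_class x"
  have n100: "i \<noteq> 100" using P assms unfolding i_def by auto
  have i99: "i \<le> 99" "1 \<le> i" using P n100 unfolding i_def by auto
  have lo: "1 / real (i+1) \<le> x" and hi: "x < 1 / real i" using P i99 unfolding i_def by auto
  have "1/12 < 1 / real i" using assms hi by linarith
  then have "real i < 12" using i99 by (simp add: field_simps)
  then have "i \<le> 11" by linarith
  then show ?thesis using i99 lo n100 unfolding wA_def i_def by auto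
qed

lemma wA_lin_large:
  assumes "1/12 \<le> x" "x < 1"
  shows "wA x \<le> (x - theta) / (1 - 2 * theta)"
proof -
  obtain i where i: "1 \<le> i" "i \<le> 11" "wA x = wAc i" "1 / real (i+1) \<le> x" using wA_large[OF assms] by blast
  have "wAc i \<le> (1 / real (i+1) - theta) / (1 - 2 * theta)" using wAc_lin i by simp
  also have "\<dots> \<le> (x - theta) / (1 - 2 * theta)"
    using i(4) by (intro divide_right_mono) (auto simp: theta_def)
  finally show ?thesis using i by simp
qed

lemma sum_list_filter_split:
  "sum_list (map (f::'a \<Rightarrow> real) xs) = sum_list (map f (filter P xs)) + sum_list (map f (filter (\<lambda>x. \<not> P x) xs))"
  by (induction xs) auto

lemma sum_list_lin: "sum_list (map (\<lambda>x. (x - a) / b) (L::real list)) = (sum_list L - real (length L) * a) / b"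
  by (induction L) (auto simp: diff_divide_distrib add_divide_distrib algebra_simps)

lemma sum_perm3:
  fixes g :: "nat \<Rightarrow> real"
  assumes "mset l = mset [a,b,c]"
  shows "sum_list (map g l) = g a + g b + g c"
proof -
  have "sum_list (map g l) = sum_mset (image_mset g (mset l))"
    by (metis mset_map sum_mset_sum_list)
  also have "\<dots> = g a + g b + g c" using assms by (simp add: add.assoc)
  finally show ?thesis .
qed

lemma enum3:
  assumes "a \<in> {1..11}" "b \<in> {1..11}" "c \<in> {1..11}"
    "1/real(a+1) + 1/real(b+1) + 1/real(c+1) < 1"
  shows "vA a + vA b + vA c + hb (1 - (1/real(a+1) + 1/real(b+1) + 1/real(c+1))) \<le> 1.44465 - 1/2"
proof -
  define l where "l = sort [a,b,c]"
  have ms: "mset l = mset [a,b,c]" unfolding l_def by simp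
  have len: "length l = 3" unfolding l_def by simp
  have so: "sorted l" unfolding l_def by simp
  have st: "set l = {a,b,c}" using ms by (metis set_mset_mset set_simps(1) set_simps(2))
  obtain r q p where l: "l = [r,q,p]" using len
    by (metis (no_types, lifting) length_0_conv length_Suc_conv numeral_3_eq_3)
  have ord: "r \<le> q" "q \<le> p" using so l by auto
  have mem: "p \<in> {1..11}" "q \<in> {1..11}" "r \<in> {1..11}" using st l assms(1-3) by auto
  have e1: "1/real(p+1) + 1/real(q+1) + 1/real(r+1) = 1/real(a+1) + 1/real(b+1) + 1/real(c+1)"
    using sum_perm3[OF ms, of "\<lambda>i. 1/real(i+1)"] l by simp
  have e2: "vA p + vA q + vA r = vA a + vA b + vA c"
    using sum_perm3[OF ms, of vA] l by simp
  have "vA p + vA q + vA r + hb (1 - (1/real(p+1) + 1/real(q+1) + 1/real(r+1))) \<le> 1.44465 - 1/2"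
  proof -
    have lt: "1/real(p+1) + 1/real(q+1) + 1/real(r+1) < 1" using e1 assms(4) by simp
    show ?thesis by (rule enum3s[rule_format, OF mem ord lt])
  qed
  then show ?thesis by (simp only: e1 e2)
qed

lemma sum_list_cmul: "sum_list (map (\<lambda>x. c * x) (L::real list)) = c * sum_list L"
  by (induction L) (auto simp: algebra_simps)

lemma list_le3: assumes "\<not> 4 \<le> length L"
  shows "L = [] \<or> (\<exists>a. L = [a]) \<or> (\<exists>a b. L = [a,b]) \<or> (\<exists>a b c. L = [a,b,c])"
proof -
  consider "length L = 0" | "length L = Suc 0" | "length L = Suc (Suc 0)" | "length L = Suc (Suc (Suc 0))"
    using assms by linarith
  then show ?thesis
    by cases (auto simp: length_Suc_conv)
qed

lemma knap:
  assumes pos: "\<forall>x\<in>set xs. 0 < x \<and> x < 1" and su: "sum_list xs < 1"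
  shows "sum_list (map wA xs) \<le> 1.44465 - 1/2"
proof -
  define L where "L = filter (\<lambda>x. 1/12 \<le> x) xs"
  define S where "S = filter (\<lambda>x. \<not> 1/12 \<le> x) xs"
  have sp1: "sum_list xs = sum_list L + sum_list S"
    using sum_list_filter_split[of "\<lambda>x. x" xs "\<lambda>x. 1/12 \<le> x"] unfolding L_def S_def by (metis map_ident)
  have sp2: "sum_list (map wA xs) = sum_list (map wA L) + sum_list (map wA S)"
    unfolding L_def S_def by (rule sum_list_filter_split)
  have Sp: "\<forall>x\<in>set S. 0 < x \<and> x < 1/12" using pos unfolding S_def by auto
  have Lp: "\<forall>x\<in>set L. 1/12 \<le> x \<and> x < 1" using pos unfolding L_def by auto
  have sS0: "sum_list S \<ge> 0" using Sp by (intro sum_list_nonneg) auto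
  have wS1: "sum_list (map wA S) \<le> 13/24 * sum_list S"
  proof -
    have "sum_list (map wA S) \<le> sum_list (map (\<lambda>x. 13/24 * x) S)"
      using Sp wA_small by (intro sum_list_mono) auto
    then show ?thesis by (simp only: sum_list_cmul)
  qed
  have wSr: "sum_list (map wA S) \<le> hb r" if "sum_list S < r" for r
  proof (cases "r \<le> 1/42")
    case True
    have "sum_list (map wA S) \<le> sum_list (map (\<lambda>x. 43/84 * x) S)"
    proof (intro sum_list_mono)
      fix x assume "x \<in> set S"
      then have "x \<le> sum_list S" using Sp by (intro member_le_sum_list) auto
      then have "x < 1/42" using that True by linarith
      then show "wA x \<le> 43/84 * x" using wA_small Sp \<open>x \<in> set S\<close> by auto
    qed
    then have "sum_list (map wA S) \<le> 43/84 * sum_list S" by (simp only: sum_list_cmul)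
    then show ?thesis using True that by (simp add: hb_def)
  next
    case False
    then show ?thesis using wS1 that by (simp add: hb_def)
  qed
  show ?thesis
  proof (cases "length L \<ge> 4")
    case True
    have "sum_list (map wA L) \<le> sum_list (map (\<lambda>x. (x - theta) / (1 - 2 * theta)) L)"
      using Lp wA_lin_large by (intro sum_list_mono) auto
    also have "\<dots> = (sum_list L - real (length L) * theta) / (1 - 2 * theta)" by (rule sum_list_lin)
    also have "\<dots> \<le> (sum_list L - 4 * theta) / (1 - 2 * theta)"
      using True by (intro divide_right_mono) (auto simp: theta_def)
    finally have wL: "sum_list (map wA L) \<le> (sum_list L - 4 * theta) / (1 - 2 * theta)" .
    have "(sum_list L - 4 * theta) / (1 - 2 * theta) + 13/24 * sum_list S \<le> 1.44465 - 1/2"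
      using sS0 sp1 su unfolding theta_def by (simp add: field_simps)
    then show ?thesis using wL wS1 sp2 by linarith
  next
    case False
    then consider "L = []" | a where "L = [a]" | a b where "L = [a,b]" | a b c where "L = [a,b,c]"
      using list_le3 by blast
    then show ?thesis
    proof cases
      case 1
      then show ?thesis using wS1 sp1 sp2 su sS0 by simp
    next
      case 2
      obtain i where i: "1 \<le> i" "i \<le> 11" "wA a = wAc i" "1 / real (i+1) \<le> a"
        using wA_large Lp 2 by force
      have "sum_list S < 1 - 1/real(i+1)" using sp1 su 2 i by simp
      then have "sum_list (map wA S) \<le> hb (1 - 1/real(i+1))" by (rule wSr)
      moreover have "wAc i \<le> vA i" using wAc_vA i by simp
      moreover have "1/real(i+1) < 1" using i by simp
      ultimately show ?thesis using enum1 i 2 sp2 by force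
    next
      case 3
      obtain i where i: "1 \<le> i" "i \<le> 11" "wA a = wAc i" "1 / real (i+1) \<le> a"
        using wA_large Lp 3 by force
      obtain j where j: "1 \<le> j" "j \<le> 11" "wA b = wAc j" "1 / real (j+1) \<le> b"
        using wA_large Lp 3 by force
      have s: "sum_list S < 1 - (1/real(i+1) + 1/real(j+1))" using sp1 su 3 i j by simp
      then have "sum_list (map wA S) \<le> hb (1 - (1/real(i+1) + 1/real(j+1)))" by (rule wSr)
      moreover have "wAc i \<le> vA i" "wAc j \<le> vA j" using wAc_vA i j by simp_all
      moreover have "1/real(i+1) + 1/real(j+1) < 1" using s sS0 by linarith
      ultimately show ?thesis using enum2 i j 3 sp2 by force
    next
      case 4
      obtain i where i: "1 \<le> i" "i \<le> 11" "wA a = wAc i" "1 / real (i+1) \<le> a"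
        using wA_large Lp 4 by force
      obtain j where j: "1 \<le> j" "j \<le> 11" "wA b = wAc j" "1 / real (j+1) \<le> b"
        using wA_large Lp 4 by force
      obtain k where k: "1 \<le> k" "k \<le> 11" "wA c = wAc k" "1 / real (k+1) \<le> c"
        using wA_large Lp 4 by force
      have s: "sum_list S < 1 - (1/real(i+1) + 1/real(j+1) + 1/real(k+1))" using sp1 su 4 i j k by simp
      then have "sum_list (map wA S) \<le> hb (1 - (1/real(i+1) + 1/real(j+1) + 1/real(k+1)))" by (rule wSr)
      moreover have "wAc i \<le> vA i" "wAc j \<le> vA j" "wAc k \<le> vA k" using wAc_vA i j k by simp_all
      moreover have lt3: "1/real(i+1) + 1/real(j+1) + 1/real(k+1) < 1" using s sS0 by linarith
      moreover have "vA i + vA j + vA k + hb (1 - (1/real(i+1) + 1/real(j+1) + 1/real(k+1))) \<le> 1.44465 - 1/2"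
        using i j k by (intro enum3 lt3) auto
      ultimately show ?thesis using 4 sp2 i j k by simp
    qed
  qed
qed

definition ind :: "bool \<Rightarrow> real" where "ind P = (if P then 1 else 0)"
definition plan :: "bin \<Rightarrow> nat" where "plan b = (if bsmall b then bcls b else bcls b + 1)"
definition s100 :: "bin \<Rightarrow> real" where "s100 b = sum_list (filter (\<lambda>x. x < 1/100) (bitems b))"

definition PB :: "bin \<Rightarrow> bool" where
  "PB b \<longleftrightarrow> 1 \<le> bcls b \<and> bcls b \<le> 100
    \<and> (\<forall>x\<in>set (bitems b). 0 < x \<and> x < 1)
    \<and> (bcls b = 1 \<longrightarrow> \<not> bsmall b \<and> \<not> bactive b \<and> \<not> bused b \<and> 1 \<le> length (bitems b))
    \<and> (bused b \<longrightarrow> 2 \<le> bcls b \<and> bsmall b \<and> \<not> bactive b)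
    \<and> (2 \<le> bcls b \<and> bcls b \<le> 99 \<longrightarrow>
         (bactive b \<longrightarrow> 1 \<le> length (bitems b) \<and> length (bitems b) < plan b)
       \<and> (\<not> bactive b \<longrightarrow> length (bitems b) = plan b + (if bused b then 1 else 0)))
    \<and> (bcls b = 100 \<longrightarrow> (\<not> bactive b \<longrightarrow> s100 b > 99/100)
                       \<and> (\<not> bused b \<longrightarrow> (\<forall>x\<in>set (bitems b). x < 1/100)))"

definition NN :: "nat \<Rightarrow> bin list \<Rightarrow> real" where "NN i B = (\<Sum>b\<leftarrow>B. ind (bcls b = i))"
definition SS :: "nat \<Rightarrow> bin list \<Rightarrow> real" where "SS i B = (\<Sum>b\<leftarrow>B. ind (bcls b = i \<and> bsmall b))"
definition AA :: "nat \<Rightarrow> bin list \<Rightarrow> real" where "AA i B = (\<Sum>b\<leftarrow>B. ind (bcls b = i \<and> bactive b))"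
definition UU :: "bin list \<Rightarrow> real" where "UU B = (\<Sum>b\<leftarrow>B. ind (bused b))"
definition ONE1 :: "bin list \<Rightarrow> real" where "ONE1 B = (\<Sum>b\<leftarrow>B. ind (bcls b = 1 \<and> length (bitems b) = 1))"
definition LL :: "bin list \<Rightarrow> real" where "LL B = (\<Sum>b\<leftarrow>B. if bcls b = 1 then real (length (bitems b)) else 0)"
definition CC :: "nat \<Rightarrow> bin list \<Rightarrow> real" where
  "CC i B = (\<Sum>b\<leftarrow>B. if bcls b = i then real (length (bitems b)) - ind (bused b) else 0)"
definition MM :: "bin list \<Rightarrow> real" where "MM B = (\<Sum>b\<leftarrow>B. if bcls b = 100 then min (s100 b) (99/100) else 0)"
definition nI :: "nat \<Rightarrow> real list \<Rightarrow> real" where "nI i I = (\<Sum>x\<leftarrow>I. ind (item_class x = i))"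
definition sz :: "real list \<Rightarrow> real" where "sz I = (\<Sum>x\<leftarrow>I. if item_class x = 100 then x else 0)"
definition GG :: "real list \<Rightarrow> bin list \<Rightarrow> real" where "GG I B = sz I - MM B"
definition WAl :: "real list \<Rightarrow> real" where "WAl I = (\<Sum>x\<leftarrow>I. wA x)"
definition WBl :: "real list \<Rightarrow> real" where "WBl I = (\<Sum>x\<leftarrow>I. wB x)"

definition GI :: "real list \<Rightarrow> bin list \<Rightarrow> bool" where
  "GI I B \<longleftrightarrow> valid_input I \<and> (\<forall>b\<in>set B. PB b) \<and> nI 1 I = UU B + LL B \<and> ONE1 B \<le> 1
     \<and> (\<forall>i. 2 \<le> i \<and> i \<le> 99 \<longrightarrow> nI i I = CC i B)
     \<and> (\<forall>i. 2 \<le> i \<and> i \<le> 100 \<longrightarrow> AA i B \<le> 1 \<and> beta_paper i * (NN i B - 1) \<le> SS i B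
                                   \<and> SS i B \<le> beta_paper i * NN i B + 1)
     \<and> 0 \<le> GG I B"

definition TI :: "real list \<Rightarrow> bin list \<Rightarrow> bool" where
  "TI I B \<longleftrightarrow> (\<exists>t \<le> length I. NN 1 B - GG I B * (100/99) \<le> WAl (take t I) - WBl (take t I) + 150)"

lemma sum_upd:
  fixes f :: "'a \<Rightarrow> real"
  assumes "j < length B"
  shows "(\<Sum>b\<leftarrow>B[j := y]. f b) = (\<Sum>b\<leftarrow>B. f b) - f (B ! j) + f y"
  using assms
proof (induction B arbitrary: j)
  case Nil then show ?case by simp
next
  case (Cons a B)
  then show ?case by (cases j) auto
qed

lemma sum_upd_same:
  fixes f :: "'a \<Rightarrow> real"
  assumes "j < length B" "f y = f (B ! j)"
  shows "(\<Sum>b\<leftarrow>B[j := y]. f b) = (\<Sum>b\<leftarrow>B. f b)"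
  using sum_upd[OF assms(1)] assms(2) by simp

lemma ind_simps[simp]: "ind True = 1" "ind False = 0" by (simp_all add: ind_def)
lemma ind_ge0: "0 \<le> ind P" by (simp add: ind_def)
lemma ind_le1: "ind P \<le> 1" by (simp add: ind_def)

lemma cls_facts:
  assumes "0 < x" "x < 1"
  shows "item_class x = 1 \<Longrightarrow> 1/2 \<le> x"
    and "item_class x = 100 \<longleftrightarrow> x < 1/100"
    and "1 \<le> item_class x" "item_class x \<le> 100"
  using item_class_props[OF assms] by auto

lemma valid_snoc: "valid_input (I @ [x]) \<Longrightarrow> valid_input I \<and> 0 < x \<and> x < 1"
  by (simp add: valid_input_def)

lemma beta_range: "2 \<le> i \<Longrightarrow> i \<le> 100 \<Longrightarrow> 0 \<le> beta_paper i \<and> beta_paper i \<le> 1"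
proof -
  assume a: "2 \<le> i" "i \<le> 100"
  show ?thesis
  proof (cases "i \<le> 11")
    case True
    then have "real i \<le> 11" by simp
    then have "2 * theta * real (i + 1) \<le> 2 * theta * 12" by (simp add: theta_def)
    then show ?thesis using a True by (auto simp: beta_paper_def theta_def Delta_def)
  next
    case False then show ?thesis using a by (simp add: beta_paper_def)
  qed
qed

lemma bin_decomp:
  fixes f :: "bin \<Rightarrow> real"
  assumes "\<forall>b\<in>set B. f b \<noteq> 0 \<longrightarrow> bcls b \<in> A" "finite A"
  shows "(\<Sum>b\<leftarrow>B. f b) = (\<Sum>i\<in>A. \<Sum>b\<leftarrow>B. if bcls b = i then f b else 0)"
  using assms(1)
proof (induction B)
  case Nil then show ?case by simp
next
  case (Cons a B)
  have "(\<Sum>i\<in>A. if bcls a = i then f a else 0) = f a"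
    using Cons.prems assms(2) by (auto simp: sum.delta)
  then show ?case using Cons by (simp add: sum.distrib)
qed

lemma item_decomp:
  fixes g :: "real \<Rightarrow> real"
  assumes "\<forall>x\<in>set I. g x \<noteq> 0 \<longrightarrow> item_class x \<in> A" "finite A"
  shows "(\<Sum>x\<leftarrow>I. g x) = (\<Sum>i\<in>A. \<Sum>x\<leftarrow>I. if item_class x = i then g x else 0)"
  using assms(1)
proof (induction I)
  case Nil then show ?case by simp
next
  case (Cons a I)
  have "(\<Sum>i\<in>A. if item_class a = i then g a else 0) = g a"
    using Cons.prems assms(2) by (auto simp: sum.delta)
  then show ?case using Cons by (simp add: sum.distrib)
qed

lemma sum_cls_const:
  assumes "\<forall>x\<in>set I. item_class x = i \<longrightarrow> g x = c"
  shows "(\<Sum>x\<leftarrow>I. if item_class x = i then g x else 0) = c * nI i I"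
  using assms by (induction I) (auto simp: nI_def ind_def algebra_simps)

lemma sum_cls_100:
  assumes "\<forall>x\<in>set I. item_class x = 100 \<longrightarrow> g x = c * x"
  shows "(\<Sum>x\<leftarrow>I. if item_class x = 100 then g x else 0) = c * sz I"
  using assms by (induction I) (auto simp: sz_def algebra_simps)

lemma sum_list_mono2:
  fixes f g :: "'a \<Rightarrow> real"
  shows "(\<And>b. b \<in> set B \<Longrightarrow> f b \<le> g b) \<Longrightarrow> (\<Sum>b\<leftarrow>B. f b) \<le> (\<Sum>b\<leftarrow>B. g b)"
  by (rule sum_list_mono)

lemma sum_list_plus: "(\<Sum>b\<leftarrow>B. (f b + g b)) = (\<Sum>b\<leftarrow>B. f b) + (\<Sum>b\<leftarrow>B. (g b::real))"
  by (induction B) auto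

lemma sum_list_cm: "(\<Sum>b\<leftarrow>B. c * f b) = c * (\<Sum>b\<leftarrow>B. (f b::real))"
  by (induction B) (auto simp: algebra_simps)

lemma sum_list_minus: "(\<Sum>b\<leftarrow>B. (f b - g b)) = (\<Sum>b\<leftarrow>B. f b) - (\<Sum>b\<leftarrow>B. (g b::real))"
  by (induction B) auto

lemma set_A: "1 \<le> c \<Longrightarrow> c \<le> (100::nat) \<Longrightarrow> c \<in> insert 1 (insert 100 {2..99})" by auto
lemma set_2100: "{2..100::nat} = insert 100 {2..99}" by auto

lemma wdiff:
  assumes "valid_input I"
  shows "WAl I - WBl I = nI 1 I / 2 + (\<Sum>i\<in>{2..99}. (wAc i - wBc i) * nI i I) - 50/99 * sz I"
proof -
  have cl: "\<forall>x\<in>set I. 1 \<le> item_class x \<and> item_class x \<le> 100"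
    using assms cls_facts unfolding valid_input_def by blast
  have "WAl I - WBl I = (\<Sum>x\<leftarrow>I. wA x - wB x)" unfolding WAl_def WBl_def sum_list_minus ..
  also have "\<dots> = (\<Sum>i\<in>insert 1 (insert 100 {2..99}). \<Sum>x\<leftarrow>I. if item_class x = i then wA x - wB x else 0)"
    using cl set_A by (intro item_decomp) auto
  also have "\<dots> = (\<Sum>x\<leftarrow>I. if item_class x = 1 then wA x - wB x else 0)
      + ((\<Sum>x\<leftarrow>I. if item_class x = 100 then wA x - wB x else 0)
      + (\<Sum>i\<in>{2..99}. \<Sum>x\<leftarrow>I. if item_class x = i then wA x - wB x else 0))"
    by simp
  also have "(\<Sum>x\<leftarrow>I. if item_class x = 1 then wA x - wB x else 0) = 1/2 * nI 1 I"
    by (intro sum_cls_const) (auto simp: wA_def wB_def wAc_def wBc_def)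
  also have "(\<Sum>x\<leftarrow>I. if item_class x = 100 then wA x - wB x else 0) = (-50/99) * sz I"
    by (intro sum_cls_100) (auto simp: wA_def wB_def)
  also have "(\<Sum>i\<in>{2..99}. \<Sum>x\<leftarrow>I. if item_class x = i then wA x - wB x else 0)
      = (\<Sum>i\<in>{2..99}. (wAc i - wBc i) * nI i I)"
    by (intro sum.cong refl sum_cls_const) (auto simp: wA_def wB_def)
  finally show ?thesis by simp
qed

lemma wBsum:
  assumes "valid_input I"
  shows "WBl I = (\<Sum>i\<in>{2..99}. wBc i * nI i I) + 100/99 * sz I"
proof -
  have cl: "\<forall>x\<in>set I. 1 \<le> item_class x \<and> item_class x \<le> 100"
    using assms cls_facts unfolding valid_input_def by blast
  have "WBl I = (\<Sum>i\<in>insert 1 (insert 100 {2..99}). \<Sum>x\<leftarrow>I. if item_class x = i then wB x else 0)"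
    unfolding WBl_def using cl set_A by (intro item_decomp) auto
  also have "\<dots> = (\<Sum>x\<leftarrow>I. if item_class x = 1 then wB x else 0)
      + ((\<Sum>x\<leftarrow>I. if item_class x = 100 then wB x else 0)
      + (\<Sum>i\<in>{2..99}. \<Sum>x\<leftarrow>I. if item_class x = i then wB x else 0))"
    by simp
  also have "(\<Sum>x\<leftarrow>I. if item_class x = 1 then wB x else 0) = 0 * nI 1 I"
    by (intro sum_cls_const) (auto simp: wB_def wBc_def)
  also have "(\<Sum>x\<leftarrow>I. if item_class x = 100 then wB x else 0) = (100/99) * sz I"
    by (intro sum_cls_100) (auto simp: wB_def)
  also have "(\<Sum>i\<in>{2..99}. \<Sum>x\<leftarrow>I. if item_class x = i then wB x else 0)
      = (\<Sum>i\<in>{2..99}. wBc i * nI i I)"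
    by (intro sum.cong refl sum_cls_const) (auto simp: wB_def)
  finally show ?thesis by simp
qed

lemma GI_PB: "GI I B \<Longrightarrow> b \<in> set B \<Longrightarrow> PB b" unfolding GI_def by auto

lemma class_bounds:
  assumes G: "GI I B" and i: "2 \<le> i" "i \<le> 99"
  shows "CC i B \<le> (real i + 1) * NN i B - SS i B"
    and "CC i B \<ge> (real i + 1) * NN i B - SS i B - real i * AA i B"
proof -
  have e1: "(real i + 1) * NN i B - SS i B = (\<Sum>b\<leftarrow>B. (real i + 1) * ind (bcls b = i) - ind (bcls b = i \<and> bsmall b))"
    unfolding NN_def SS_def sum_list_minus sum_list_cm ..
  have e2: "(real i + 1) * NN i B - SS i B - real i * AA i B = (\<Sum>b\<leftarrow>B. (real i + 1) * ind (bcls b = i)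
      - ind (bcls b = i \<and> bsmall b) - real i * ind (bcls b = i \<and> bactive b))"
    unfolding NN_def SS_def AA_def sum_list_minus sum_list_cm ..
  show "CC i B \<le> (real i + 1) * NN i B - SS i B"
    unfolding e1 CC_def
  proof (rule sum_list_mono)
    fix b assume "b \<in> set B"
    then have P: "PB b" using G GI_PB by blast
    show "(if bcls b = i then real (length (bitems b)) - ind (bused b) else 0)
          \<le> (real i + 1) * ind (bcls b = i) - ind (bcls b = i \<and> bsmall b)"
    proof (cases "bcls b = i")
      case True
      have "real (length (bitems b)) - ind (bused b) \<le> real (plan b)"
        using P True i unfolding PB_def by (cases "bactive b") (auto simp: ind_def)
      moreover have "real (plan b) = (real i + 1) - ind (bsmall b)" using True by (simp add: plan_def ind_def)
      ultimately show ?thesis using True by (simp add: ind_def)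
    qed (simp add: ind_def)
  qed
  show "CC i B \<ge> (real i + 1) * NN i B - SS i B - real i * AA i B"
    unfolding e2 CC_def
  proof (rule sum_list_mono)
    fix b assume "b \<in> set B"
    then have P: "PB b" using G GI_PB by blast
    show "(real i + 1) * ind (bcls b = i) - ind (bcls b = i \<and> bsmall b) - real i * ind (bcls b = i \<and> bactive b)
       \<le> (if bcls b = i then real (length (bitems b)) - ind (bused b) else 0)"
    proof (cases "bcls b = i")
      case True
      have pl: "real (plan b) = (real i + 1) - ind (bsmall b)" using True by (simp add: plan_def ind_def)
      show ?thesis
      proof (cases "bactive b")
        case True
        then have "1 \<le> length (bitems b)" "\<not> bused b" using P \<open>bcls b = i\<close> i unfolding PB_def by auto
        then show ?thesis using True \<open>bcls b = i\<close> by (auto simp: ind_def)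
      next
        case False
        then have "length (bitems b) = plan b + (if bused b then 1 else 0)"
          using P \<open>bcls b = i\<close> i unfolding PB_def by auto
        then show ?thesis using False \<open>bcls b = i\<close> pl by (auto simp: ind_def)
      qed
    qed (simp add: ind_def)
  qed
qed

lemma GI_S: "GI I B \<Longrightarrow> 2 \<le> i \<Longrightarrow> i \<le> 100 \<Longrightarrow>
   AA i B \<le> 1 \<and> beta_paper i * (NN i B - 1) \<le> SS i B \<and> SS i B \<le> beta_paper i * NN i B + 1"
  unfolding GI_def by auto

lemma GI_n: "GI I B \<Longrightarrow> 2 \<le> i \<Longrightarrow> i \<le> 99 \<Longrightarrow> nI i I = CC i B"
  unfolding GI_def by auto

lemma AA_ge0: "0 \<le> AA i B" unfolding AA_def by (intro sum_list_nonneg) (auto simp: ind_def)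

lemma perclass_c1:
  assumes G: "GI I B" and i: "2 \<le> i" "i \<le> 99"
  shows "beta_paper i * wBc i * nI i I - SS i B \<le> 2"
proof -
  define b where "b = beta_paper i"
  define N where "N = NN i B"
  define S where "S = SS i B"
  define n where "n = nI i I"
  define k where "k = real i + 1"
  have br: "0 \<le> b" "b \<le> 1" using beta_range i unfolding b_def by auto
  have k3: "k \<ge> 3" using i unfolding k_def by simp
  have w: "wBc i = 1 / (k - b)" using i unfolding wBc_def k_def b_def by simp
  have nle: "n \<le> k * N - S" using class_bounds(1)[OF G i] GI_n[OF G i] unfolding n_def k_def N_def S_def by simp
  have Sge: "b * (N - 1) \<le> S" using GI_S[OF G] i unfolding b_def N_def S_def by auto
  have h1: "b * n \<le> b * (k * N - S)" using nle br by (intro mult_left_mono) auto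
  have h2: "k * (b * N - S) \<le> k * b" using Sge k3 by (intro mult_left_mono) (auto simp: algebra_simps)
  have h3a: "k * b \<le> k" using br k3 by (simp add: mult_left_le)
  have h3b: "k \<le> 2 * (k - b)" using br k3 by (simp add: algebra_simps)
  have h3: "k * b \<le> 2 * (k - b)" using h3a h3b by (rule order_trans)
  have "b * n \<le> (S + 2) * (k - b)"
    using h1 h2 h3 by (simp add: algebra_simps)
  then have "b * n / (k - b) \<le> S + 2" using br k3 by (simp add: field_simps)
  then show ?thesis unfolding w b_def[symmetric] n_def[symmetric] S_def[symmetric] by simp
qed

lemma perclass_alg:
  assumes G: "GI I B" and i: "2 \<le> i" "i \<le> 99"
  shows "NN i B \<le> wBc i * nI i I + 2"
proof -
  define b where "b = beta_paper i"
  define N where "N = NN i B"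
  define S where "S = SS i B"
  define n where "n = nI i I"
  define A where "A = AA i B"
  define k where "k = real i + 1"
  have br: "0 \<le> b" "b \<le> 1" using beta_range i unfolding b_def by auto
  have k3: "k \<ge> 3" using i unfolding k_def by simp
  have w: "wBc i = 1 / (k - b)" using i unfolding wBc_def k_def b_def by simp
  have nge: "n \<ge> k * N - S - (k - 1) * A" using class_bounds(2)[OF G i] GI_n[OF G i]
    unfolding n_def k_def N_def S_def A_def by simp
  have A1: "A \<le> 1" "0 \<le> A" using GI_S[OF G] i AA_ge0 unfolding A_def by auto
  have "(k - 1) * A \<le> (k - 1) * 1" using A1 k3 by (intro mult_left_mono) auto
  moreover have Sle: "S \<le> b * N + 1" using GI_S[OF G] i unfolding b_def N_def S_def by auto
  ultimately have "n \<ge> (k - b) * N - k" using nge by (simp add: algebra_simps)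
  then have "N \<le> (n + k) / (k - b)" using br k3 by (simp add: field_simps)
  also have "\<dots> = n / (k - b) + k / (k - b)" by (simp add: add_divide_distrib)
  also have "k / (k - b) \<le> 2" using br k3 by (simp add: field_simps)
  finally show ?thesis unfolding w n_def N_def by simp
qed

lemma sum_if_ind: "(\<Sum>b\<leftarrow>B. if bcls b = i then ind (P b) else 0) = (\<Sum>b\<leftarrow>B. ind (bcls b = i \<and> P b))"
  by (induction B) (auto simp: ind_def)

lemma sum_one_len: "(\<Sum>b\<leftarrow>B. (1::real)) = real (length B)"
  by (induction B) auto

lemma card_2_99: "card {2..99::nat} = 98" by simp
lemma card_2_100: "card {2..100::nat} = 99" by simp

lemma c1bound_real:
  assumes G: "GI I B" and nr: "\<not> (\<exists>b\<in>set B. ready b)"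
  shows "NN 1 B - GG I B * (100/99) \<le> WAl I - WBl I + 150"
proof -
  have v: "valid_input I" using G unfolding GI_def by simp
  have P: "\<And>b. b \<in> set B \<Longrightarrow> PB b" using G GI_PB by blast
  have a0: "(\<Sum>b\<leftarrow>B. 2 * ind (bcls b = 1)) \<le> (\<Sum>b\<leftarrow>B. (if bcls b = 1 then real (length (bitems b)) else 0)
            + ind (bcls b = 1 \<and> length (bitems b) = 1))"
  proof (rule sum_list_mono)
    fix b assume "b \<in> set B"
    then have "PB b" by (rule P)
    then have "bcls b = 1 \<Longrightarrow> 1 \<le> length (bitems b)" unfolding PB_def by auto
    then show "2 * ind (bcls b = 1) \<le> (if bcls b = 1 then real (length (bitems b)) else 0)
            + ind (bcls b = 1 \<and> length (bitems b) = 1)"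
      by (cases "length (bitems b) = 1") (auto simp: ind_def)
  qed
  have a: "2 * NN 1 B \<le> LL B + ONE1 B"
    using a0 unfolding NN_def LL_def ONE1_def sum_list_cm sum_list_plus .
  have O1: "ONE1 B \<le> 1" and n1: "nI 1 I = UU B + LL B" using G unfolding GI_def by auto
  have c0: "(\<Sum>b\<leftarrow>B. ind (bsmall b)) \<le> (\<Sum>b\<leftarrow>B. ind (bused b) + ind (2 \<le> bcls b \<and> bcls b \<le> 100 \<and> bactive b))"
  proof (rule sum_list_mono)
    fix b assume b: "b \<in> set B"
    then have Pb: "PB b" by (rule P)
    have "\<not> ready b" using nr b by blast
    then show "ind (bsmall b) \<le> ind (bused b) + ind (2 \<le> bcls b \<and> bcls b \<le> 100 \<and> bactive b)"
      using Pb unfolding PB_def ready_def by (cases "bcls b = 1") (auto simp: ind_def)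
  qed
  have c: "(\<Sum>b\<leftarrow>B. ind (bsmall b)) \<le> UU B + (\<Sum>b\<leftarrow>B. ind (2 \<le> bcls b \<and> bcls b \<le> 100 \<and> bactive b))"
    using c0 unfolding UU_def sum_list_plus .
  have d: "(\<Sum>b\<leftarrow>B. ind (bsmall b)) = (\<Sum>i\<in>{2..100}. SS i B)"
  proof -
    have "(\<Sum>b\<leftarrow>B. ind (bsmall b)) = (\<Sum>i\<in>{2..100}. \<Sum>b\<leftarrow>B. if bcls b = i then ind (bsmall b) else 0)"
    proof (rule bin_decomp)
      show "\<forall>b\<in>set B. ind (bsmall b) \<noteq> 0 \<longrightarrow> bcls b \<in> {2..100}"
      proof
        fix b assume "b \<in> set B"
        then have "PB b" by (rule P)
        then show "ind (bsmall b) \<noteq> 0 \<longrightarrow> bcls b \<in> {2..100}"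
          unfolding PB_def by (cases "bcls b = 1") (auto simp: ind_def)
      qed
    qed simp
    then show ?thesis unfolding sum_if_ind SS_def .
  qed
  have e: "(\<Sum>b\<leftarrow>B. ind (2 \<le> bcls b \<and> bcls b \<le> 100 \<and> bactive b)) = (\<Sum>i\<in>{2..100}. AA i B)"
  proof -
    have "(\<Sum>b\<leftarrow>B. ind (2 \<le> bcls b \<and> bcls b \<le> 100 \<and> bactive b))
        = (\<Sum>i\<in>{2..100}. \<Sum>b\<leftarrow>B. if bcls b = i then ind (2 \<le> bcls b \<and> bcls b \<le> 100 \<and> bactive b) else 0)"
      by (rule bin_decomp) (auto simp: ind_def)
    also have "\<dots> = (\<Sum>i\<in>{2..100}. AA i B)"
    proof (rule sum.cong)
      fix i :: nat assume "i \<in> {2..100}"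
      then show "(\<Sum>b\<leftarrow>B. if bcls b = i then ind (2 \<le> bcls b \<and> bcls b \<le> 100 \<and> bactive b) else 0) = AA i B"
        unfolding AA_def by (induction B) (auto simp: ind_def)
    qed simp
    finally show ?thesis .
  qed
  have eb: "(\<Sum>i\<in>{2..100}. AA i B) \<le> 99"
  proof -
    have "(\<Sum>i\<in>{2..100}. AA i B) \<le> real (card {2..100::nat}) * 1"
      using GI_S[OF G] by (intro sum_bounded_above) auto
    then show ?thesis by simp
  qed
  have f: "(\<Sum>i\<in>{2..100}. SS i B) = (\<Sum>i\<in>{2..99}. SS i B) + SS 100 B"
    unfolding set_2100 by simp
  have g: "(\<Sum>i\<in>{2..99}. beta_paper i * wBc i * nI i I - SS i B) \<le> 196"
  proof -
    have "(\<Sum>i\<in>{2..99}. beta_paper i * wBc i * nI i I - SS i B) \<le> real (card {2..99::nat}) * 2"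
      using perclass_c1[OF G] by (intro sum_bounded_above) auto
    then show ?thesis by simp
  qed
  have g2: "(\<Sum>i\<in>{2..99}. beta_paper i * wBc i * nI i I - SS i B)
      = (\<Sum>i\<in>{2..99}. beta_paper i * wBc i * nI i I) - (\<Sum>i\<in>{2..99}. SS i B)"
    by (simp add: sum_subtractf)
  have wd: "(\<Sum>i\<in>{2..99}. (wAc i - wBc i) * nI i I) = - (1/2) * (\<Sum>i\<in>{2..99}. beta_paper i * wBc i * nI i I)"
  proof -
    have "(\<Sum>i\<in>{2..99}. (wAc i - wBc i) * nI i I) = (\<Sum>i\<in>{2..99}. - (1/2) * (beta_paper i * wBc i * nI i I))"
    proof (rule sum.cong)
      fix i :: nat assume i: "i \<in> {2..99}"
      define d where "d = real i + 1 - beta_paper i"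
      have "wAc i - wBc i = (1 - beta_paper i / 2) / d - 1 / d"
        using i unfolding wAc_def wBc_def d_def by auto
      also have "\<dots> = ((1 - beta_paper i / 2) - 1) / d" by (rule diff_divide_distrib[symmetric])
      also have "\<dots> = - (1/2) * (beta_paper i * (1 / d))" by simp
      also have "1 / d = wBc i" using i unfolding wBc_def d_def by auto
      finally have "wAc i - wBc i = - (1/2) * (beta_paper i * wBc i)" .
      then show "(wAc i - wBc i) * nI i I = - (1/2) * (beta_paper i * wBc i * nI i I)" by simp
    qed simp
    then show ?thesis by (simp add: sum_distrib_left)
  qed
  have h: "NN 100 B - SS 100 B \<le> 1" using GI_S[OF G, of 100] by (simp add: beta_paper_def)
  have i0: "MM B \<le> (\<Sum>b\<leftarrow>B. 99/100 * ind (bcls b = 100))"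
    unfolding MM_def by (rule sum_list_mono) (auto simp: ind_def)
  have i: "MM B \<le> 99/100 * NN 100 B" using i0 unfolding sum_list_cm NN_def .
  have j: "MM B \<le> sz I" using G unfolding GI_def GG_def by simp
  have W: "WAl I - WBl I = nI 1 I / 2 + (\<Sum>i\<in>{2..99}. (wAc i - wBc i) * nI i I) - 50/99 * sz I"
    by (rule wdiff[OF v])
  define X where "X = (\<Sum>i\<in>{2..99}. beta_paper i * wBc i * nI i I)"
  define Y where "Y = (\<Sum>i\<in>{2..99}. SS i B)"
  have W': "WAl I - WBl I = nI 1 I / 2 - X / 2 - 50/99 * sz I"
    using W wd unfolding X_def by simp
  have gX: "X - Y \<le> 196" using g g2 unfolding X_def Y_def by simp
  have cY: "Y + SS 100 B \<le> UU B + 99" using c d e eb f unfolding Y_def by simp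
  have dist: "GG I B * (100/99) = sz I * (100/99) - MM B * (100/99)"
    unfolding GG_def by (rule left_diff_distrib)
  show ?thesis
    using a O1 n1 h i j W' gX cY dist by linarith
qed

lemma nI_snoc: "nI i (I @ [x]) = nI i I + ind (item_class x = i)" by (simp add: nI_def)
lemma sz_snoc: "sz (I @ [x]) = sz I + (if item_class x = 100 then x else 0)" by (simp add: sz_def)

lemma step_ready:
  assumes G: "GI I B" and T: "TI I B" and v: "valid_input (I @ [x])"
    and c: "item_class x = 1" and j: "j < length B" and r: "ready (B ! j)"
  shows "GI (I @ [x]) (B[j := (add_item x (B ! j))\<lparr>bused := True\<rparr>])
       \<and> TI (I @ [x]) (B[j := (add_item x (B ! j))\<lparr>bused := True\<rparr>])"
proof -
  define b where "b = B ! j"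
  define b' where "b' = (add_item x b)\<lparr>bused := True\<rparr>"
  define B' where "B' = B[j := b']"
  have PBb: "PB b" using G j unfolding GI_def b_def by auto
  have x: "0 < x" "x < 1" using v valid_snoc by auto
  have x2: "1/2 \<le> x" using cls_facts(1)[OF x c] .
  have rb: "2 \<le> bcls b" "bsmall b" "\<not> bactive b" "\<not> bused b" using r unfolding ready_def b_def by auto
  have bb[simp]: "bcls b' = bcls b" "bsmall b' = bsmall b" "bactive b' = bactive b" "bused b'"
     "bitems b' = bitems b @ [x]"
    unfolding b'_def add_item_def by simp_all
  have s: "s100 b' = s100 b" using x2 unfolding s100_def by simp
  have PBb': "PB b'"
    using PBb rb x s unfolding PB_def plan_def by auto
  have same: "(\<Sum>c\<leftarrow>B'. f c) = (\<Sum>c\<leftarrow>B. f c)" if "f b' = f b" for f :: "bin \<Rightarrow> real"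
    unfolding B'_def using sum_upd_same[OF j, of f b'] that b_def by simp
  have setB': "\<forall>c\<in>set B'. PB c"
    using G PBb' set_update_subset_insert[of B j b'] unfolding GI_def B'_def by blast
  have NN: "NN i B' = NN i B" for i unfolding NN_def by (rule same) simp
  have SS: "SS i B' = SS i B" for i unfolding SS_def by (rule same) simp
  have AA: "AA i B' = AA i B" for i unfolding AA_def by (rule same) simp
  have nc1: "bcls b \<noteq> 1" using rb by simp
  have ON: "ONE1 B' = ONE1 B" unfolding ONE1_def by (rule same) (use nc1 in \<open>auto simp: ind_def\<close>)
  have LL: "LL B' = LL B" unfolding LL_def by (rule same) (use rb in simp)
  have CC: "CC i B' = CC i B" for i unfolding CC_def by (rule same) (simp add: rb)
  have MM: "MM B' = MM B" unfolding MM_def by (rule same) (simp add: s)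
  have UU: "UU B' = UU B + 1"
    unfolding UU_def B'_def using sum_upd[OF j, of "\<lambda>c. ind (bused c)" b'] rb b_def by simp
  have n1: "nI 1 (I @ [x]) = nI 1 I + 1" using c by (simp add: nI_snoc)
  have ni: "i \<noteq> 1 \<Longrightarrow> nI i (I @ [x]) = nI i I" for i using c by (simp add: nI_snoc)
  have szs: "sz (I @ [x]) = sz I" using c by (simp add: sz_snoc)
  have GG: "GG (I @ [x]) B' = GG I B" unfolding GG_def using szs MM by simp
  have "GI (I @ [x]) B'"
    using G setB' NN SS AA ON LL CC UU n1 ni GG v unfolding GI_def by auto
  moreover have "TI (I @ [x]) B'"
  proof -
    obtain t where t: "t \<le> length I" "NN 1 B - GG I B * (100/99) \<le> WAl (take t I) - WBl (take t I) + 150"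
      using T unfolding TI_def by blast
    have "take t (I @ [x]) = take t I" using t(1) by simp
    then show ?thesis unfolding TI_def using t NN GG by (intro exI[of _ t]) auto
  qed
  ultimately show ?thesis unfolding B'_def b'_def b_def by simp
qed


lemma sum_ind_zero: "(\<forall>b\<in>set B. \<not> P b) \<Longrightarrow> (\<Sum>b\<leftarrow>B. ind (P b)) = 0"
  by (induction B) auto

lemma step_pair:
  assumes G: "GI I B" and v: "valid_input (I @ [x])"
    and c: "item_class x = 1" and nr: "\<not> (\<exists>b\<in>set B. ready b)" and j: "j < length B"
    and c1: "bcls (B ! j) = 1" and l1: "length (bitems (B ! j)) = 1"
  shows "GI (I @ [x]) (B[j := add_item x (B ! j)]) \<and> TI (I @ [x]) (B[j := add_item x (B ! j)])"
proof -
  define b where "b = B ! j"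
  define b' where "b' = add_item x b"
  define B' where "B' = B[j := b']"
  have PBb: "PB b" using G j unfolding GI_def b_def by auto
  have x: "0 < x" "x < 1" using v valid_snoc by auto
  have rb: "bcls b = 1" "length (bitems b) = 1" "\<not> bsmall b" "\<not> bactive b" "\<not> bused b"
    using PBb c1 l1 unfolding b_def PB_def by auto
  have bb[simp]: "bcls b' = bcls b" "bsmall b' = bsmall b" "bactive b' = bactive b" "bused b' = bused b"
     "bitems b' = bitems b @ [x]"
    unfolding b'_def add_item_def by simp_all
  have PBb': "PB b'"
    using PBb rb x unfolding PB_def plan_def by auto
  have same: "(\<Sum>c\<leftarrow>B'. f c) = (\<Sum>c\<leftarrow>B. f c)" if "f b' = f b" for f :: "bin \<Rightarrow> real"
    unfolding B'_def using sum_upd_same[OF j, of f b'] that b_def by simp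
  have chg: "(\<Sum>c\<leftarrow>B'. f c) = (\<Sum>c\<leftarrow>B. f c) - f b + f b'" for f :: "bin \<Rightarrow> real"
    unfolding B'_def using sum_upd[OF j, of f b'] b_def by simp
  have setB': "\<forall>c\<in>set B'. PB c"
    using G PBb' set_update_subset_insert[of B j b'] unfolding GI_def B'_def by blast
  have nrB': "\<not> (\<exists>c\<in>set B'. ready c)"
    using nr set_update_subset_insert[of B j b'] rb unfolding B'_def ready_def by auto
  have NN: "NN i B' = NN i B" for i unfolding NN_def by (rule same) simp
  have SS: "SS i B' = SS i B" for i unfolding SS_def by (rule same) simp
  have AA: "AA i B' = AA i B" for i unfolding AA_def by (rule same) simp
  have UU: "UU B' = UU B" unfolding UU_def by (rule same) simp
  have ON: "ONE1 B' = ONE1 B - 1" unfolding ONE1_def chg using rb by simp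
  have LL: "LL B' = LL B + 1" unfolding LL_def chg using rb by simp
  have CC: "i \<noteq> 1 \<Longrightarrow> CC i B' = CC i B" for i unfolding CC_def by (rule same) (use rb in auto)
  have MM: "MM B' = MM B" unfolding MM_def by (rule same) (use rb in auto)
  have n1: "nI 1 (I @ [x]) = nI 1 I + 1" using c by (simp add: nI_snoc)
  have ni: "i \<noteq> 1 \<Longrightarrow> nI i (I @ [x]) = nI i I" for i using c by (simp add: nI_snoc)
  have szs: "sz (I @ [x]) = sz I" using c by (simp add: sz_snoc)
  have GG: "GG (I @ [x]) B' = GG I B" unfolding GG_def using szs MM by simp
  have GI': "GI (I @ [x]) B'"
    using G setB' NN SS AA ON LL CC UU n1 ni GG v unfolding GI_def by auto
  moreover have "TI (I @ [x]) B'"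
    unfolding TI_def using c1bound_real[OF GI' nrB'] by (intro exI[of _ "length (I @ [x])"]) auto
  ultimately show ?thesis unfolding B'_def b'_def b_def by simp
qed

lemma step_new1:
  assumes G: "GI I B" and v: "valid_input (I @ [x])"
    and c: "item_class x = 1" and nr: "\<not> (\<exists>b\<in>set B. ready b)"
    and no1: "\<not> (\<exists>b\<in>set B. bcls b = 1 \<and> length (bitems b) = 1)"
  shows "GI (I @ [x]) (B @ [\<lparr>bcls = 1, bsmall = False, bactive = False, bused = False, bitems = [x]\<rparr>])
       \<and> TI (I @ [x]) (B @ [\<lparr>bcls = 1, bsmall = False, bactive = False, bused = False, bitems = [x]\<rparr>])"
proof -
  define nb :: bin where "nb = \<lparr>bcls = 1, bsmall = False, bactive = False, bused = False, bitems = [x]\<rparr>"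
  define B' where "B' = B @ [nb]"
  have x: "0 < x" "x < 1" using v valid_snoc by auto
  have PBn: "PB nb" using x unfolding PB_def nb_def plan_def by auto
  have setB': "\<forall>c\<in>set B'. PB c" using G PBn unfolding GI_def B'_def by auto
  have nrB': "\<not> (\<exists>c\<in>set B'. ready c)" using nr unfolding B'_def ready_def nb_def by auto
  have app: "(\<Sum>c\<leftarrow>B'. f c) = (\<Sum>c\<leftarrow>B. f c) + f nb" for f :: "bin \<Rightarrow> real"
    unfolding B'_def by simp
  have O0: "ONE1 B = 0" unfolding ONE1_def using no1 by (intro sum_ind_zero) auto
  have NN: "i \<noteq> 1 \<Longrightarrow> NN i B' = NN i B" for i unfolding NN_def app by (simp add: nb_def)
  have SS: "SS i B' = SS i B" for i unfolding SS_def app by (simp add: nb_def)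
  have AA: "AA i B' = AA i B" for i unfolding AA_def app by (simp add: nb_def)
  have UU: "UU B' = UU B" unfolding UU_def app by (simp add: nb_def)
  have ON: "ONE1 B' = 1" unfolding ONE1_def app using O0 unfolding ONE1_def by (simp add: nb_def)
  have LL: "LL B' = LL B + 1" unfolding LL_def app by (simp add: nb_def)
  have CC: "i \<noteq> 1 \<Longrightarrow> CC i B' = CC i B" for i unfolding CC_def app by (simp add: nb_def)
  have MM: "MM B' = MM B" unfolding MM_def app by (simp add: nb_def)
  have n1: "nI 1 (I @ [x]) = nI 1 I + 1" using c by (simp add: nI_snoc)
  have ni: "i \<noteq> 1 \<Longrightarrow> nI i (I @ [x]) = nI i I" for i using c by (simp add: nI_snoc)
  have szs: "sz (I @ [x]) = sz I" using c by (simp add: sz_snoc)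
  have GG: "GG (I @ [x]) B' = GG I B" unfolding GG_def using szs MM by simp
  have GI': "GI (I @ [x]) B'"
    using G setB' NN SS AA ON LL CC UU n1 ni GG v unfolding GI_def by auto
  moreover have "TI (I @ [x]) B'"
    unfolding TI_def using c1bound_real[OF GI' nrB'] by (intro exI[of _ "length (I @ [x])"]) auto
  ultimately show ?thesis unfolding B'_def nb_def by simp
qed

lemma sum_ind_len: "(\<Sum>b\<leftarrow>B. ind (P b)) = real (length (filter P B))"
  by (induction B) auto

lemma step_active:
  assumes G: "GI I B" and T: "TI I B" and v: "valid_input (I @ [x])"
    and c: "item_class x = i" and i2: "2 \<le> i" and j: "j < length B"
    and ci: "bcls (B ! j) = i" and act: "bactive (B ! j)"
  shows "GI (I @ [x]) (B[j := close_bin (add_item x (B ! j))])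
       \<and> TI (I @ [x]) (B[j := close_bin (add_item x (B ! j))])"
proof -
  define b where "b = B ! j"
  define b2 where "b2 = add_item x b"
  define b' where "b' = close_bin b2"
  define B' where "B' = B[j := b']"
  have PBb: "PB b" using G j unfolding GI_def b_def by auto
  have x: "0 < x" "x < 1" using v valid_snoc by auto
  have i100: "i \<le> 100" using cls_facts(4)[OF x] c by simp
  have rb: "bcls b = i" "bactive b" "\<not> bused b" using PBb ci act unfolding b_def PB_def by auto
  have bb[simp]: "bcls b' = bcls b" "bsmall b' = bsmall b" "bactive b' = (\<not> full b2)" "bused b' = bused b"
     "bitems b' = bitems b @ [x]"
    unfolding b'_def b2_def close_bin_def add_item_def using rb by simp_all
  have b2f: "bcls b2 = bcls b" "bsmall b2 = bsmall b" "bitems b2 = bitems b @ [x]"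
    unfolding b2_def add_item_def by simp_all
  have PBb': "PB b'"
  proof (cases "i \<le> 99")
    case True
    have fu: "full b2 \<longleftrightarrow> length (bitems b) + 1 = plan b"
      unfolding full_def b2f plan_def using True rb by (simp add: M_def)
    show ?thesis using PBb rb x True fu unfolding PB_def by (auto simp: plan_def)
  next
    case False
    then have i1: "i = 100" using i100 by simp
    have xs: "x < 1/100" using cls_facts(2)[OF x] c i1 by simp
    have allb: "\<forall>y\<in>set (bitems b). y < 1/100" using PBb rb i1 unfolding PB_def by auto
    have s': "s100 b' = sum_list (bitems b) + x"
      unfolding s100_def using allb xs by (simp add: filter_True)
    have fu: "full b2 \<Longrightarrow> sum_list (bitems b) + x > 99/100"
      unfolding full_def b2f using rb i1 by (auto simp: M_def split: if_splits)
    show ?thesis using PBb rb x i1 fu s' allb xs unfolding PB_def by auto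
  qed
  have same: "(\<Sum>c\<leftarrow>B'. f c) = (\<Sum>c\<leftarrow>B. f c)" if "f b' = f b" for f :: "bin \<Rightarrow> real"
    unfolding B'_def using sum_upd_same[OF j, of f b'] that b_def by simp
  have chg: "(\<Sum>c\<leftarrow>B'. f c) = (\<Sum>c\<leftarrow>B. f c) - f b + f b'" for f :: "bin \<Rightarrow> real"
    unfolding B'_def using sum_upd[OF j, of f b'] b_def by simp
  have setB': "\<forall>c\<in>set B'. PB c"
    using G PBb' set_update_subset_insert[of B j b'] unfolding GI_def B'_def by blast
  have NN: "NN k B' = NN k B" for k unfolding NN_def by (rule same) simp
  have SS: "SS k B' = SS k B" for k unfolding SS_def by (rule same) simp
  have AA: "AA k B' \<le> AA k B" for k unfolding AA_def chg using rb by (auto simp: ind_def)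
  have UU: "UU B' = UU B" unfolding UU_def by (rule same) simp
  have ON: "ONE1 B' = ONE1 B" unfolding ONE1_def by (rule same) (use rb i2 in \<open>auto simp: ind_def\<close>)
  have LL: "LL B' = LL B" unfolding LL_def by (rule same) (use rb i2 in auto)
  have CC: "CC k B' = CC k B + ind (k = i)" for k unfolding CC_def chg using rb by (auto simp: ind_def)
  have n1: "nI 1 (I @ [x]) = nI 1 I" using c i2 by (simp add: nI_snoc)
  have ni: "nI k (I @ [x]) = nI k I + ind (k = i)" for k using c by (auto simp add: nI_snoc ind_def)
  have GG: "GG (I @ [x]) B' \<ge> GG I B"
  proof (cases "i = 100")
    case False
    have MM: "MM B' = MM B" unfolding MM_def by (rule same) (use rb False in auto)
    have "sz (I @ [x]) = sz I" using c False by (simp add: sz_snoc)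
    then show ?thesis unfolding GG_def using MM by simp
  next
    case True
    have xs: "x < 1/100" using cls_facts(2)[OF x] c True by simp
    have s': "s100 b' = s100 b + x" unfolding s100_def using xs by simp
    have "min (s100 b') (99/100) \<le> min (s100 b) (99/100) + x" using s' x by linarith
    then have MM: "MM B' \<le> MM B + x" unfolding MM_def chg using rb True by simp
    have "sz (I @ [x]) = sz I + x" using c True by (simp add: sz_snoc)
    then show ?thesis unfolding GG_def using MM by simp
  qed
  have GI': "GI (I @ [x]) B'"
  proof -
    have "AA k B' \<le> 1" if "2 \<le> k" "k \<le> 100" for k using AA[of k] G that unfolding GI_def by fastforce
    then show ?thesis
      using G setB' NN SS UU ON LL CC n1 ni GG v unfolding GI_def by auto
  qed
  moreover have "TI (I @ [x]) B'"
  proof -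
    obtain t where t: "t \<le> length I" "NN 1 B - GG I B * (100/99) \<le> WAl (take t I) - WBl (take t I) + 150"
      using T unfolding TI_def by blast
    have "take t (I @ [x]) = take t I" using t(1) by simp
    then show ?thesis unfolding TI_def using t NN GG by (intro exI[of _ t]) auto
  qed
  ultimately show ?thesis unfolding B'_def b'_def b2_def b_def by simp
qed

lemma step_newi:
  assumes G: "GI I B" and T: "TI I B" and v: "valid_input (I @ [x])"
    and c: "item_class x = i" and i2: "2 \<le> i" and na: "\<not> (\<exists>b\<in>set B. bcls b = i \<and> bactive b)"
  defines "nb \<equiv> close_bin \<lparr>bcls = i,
                 bsmall = (real (length (filter (\<lambda>b. bcls b = i \<and> bsmall b) B))
                           \<le> beta_paper i * real (length (filter (\<lambda>b. bcls b = i) B))),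
                 bactive = True, bused = False, bitems = [x]\<rparr>"
  shows "GI (I @ [x]) (B @ [nb]) \<and> TI (I @ [x]) (B @ [nb])"
proof -
  define sm where "sm = (real (length (filter (\<lambda>b. bcls b = i \<and> bsmall b) B))
                           \<le> beta_paper i * real (length (filter (\<lambda>b. bcls b = i) B)))"
  define nb0 :: bin where "nb0 = \<lparr>bcls = i, bsmall = sm, bactive = True, bused = False, bitems = [x]\<rparr>"
  have nbd: "nb = close_bin nb0" unfolding nb_def nb0_def sm_def by simp
  define B' where "B' = B @ [nb]"
  have x: "0 < x" "x < 1" using v valid_snoc by auto
  have i100: "i \<le> 100" using cls_facts(4)[OF x] c by simp
  have nf: "\<not> full nb0"
  proof (cases "i \<le> 99")
    case True then show ?thesis using i2 unfolding full_def nb0_def by (auto simp: M_def)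
  next
    case False
    then have "i = 100" using i100 by simp
    moreover have "x < 1/100" using cls_facts(2)[OF x] c \<open>i = 100\<close> by simp
    ultimately show ?thesis unfolding full_def nb0_def by (auto simp: M_def)
  qed
  have nbf[simp]: "bcls nb = i" "bsmall nb = sm" "bactive nb" "\<not> bused nb" "bitems nb = [x]"
    unfolding nbd close_bin_def using nf by (simp_all add: nb0_def)
  have PBn: "PB nb"
  proof (cases "i \<le> 99")
    case True then show ?thesis using i2 x unfolding PB_def plan_def by auto
  next
    case False
    then have "i = 100" using i100 by simp
    moreover have "x < 1/100" using cls_facts(2)[OF x] c \<open>i = 100\<close> by simp
    ultimately show ?thesis using x unfolding PB_def plan_def by auto
  qed
  have setB': "\<forall>c\<in>set B'. PB c" using G PBn unfolding GI_def B'_def by auto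
  have app: "(\<Sum>c\<leftarrow>B'. f c) = (\<Sum>c\<leftarrow>B. f c) + f nb" for f :: "bin \<Rightarrow> real"
    unfolding B'_def by simp
  have A0: "AA i B = 0" unfolding AA_def using na by (intro sum_ind_zero) auto
  have NN: "NN k B' = NN k B + ind (k = i)" for k unfolding NN_def app by (simp add: ind_def)
  have SS: "SS k B' = SS k B + ind (k = i \<and> sm)" for k unfolding SS_def app by (simp add: ind_def)
  have AA: "AA k B' = AA k B + ind (k = i)" for k unfolding AA_def app by (simp add: ind_def)
  have UU: "UU B' = UU B" unfolding UU_def app by simp
  have ON: "ONE1 B' = ONE1 B" unfolding ONE1_def app using i2 by (simp add: ind_def)
  have LL: "LL B' = LL B" unfolding LL_def app using i2 by simp
  have CC: "CC k B' = CC k B + ind (k = i)" for k unfolding CC_def app by (simp add: ind_def)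
  have n1: "nI 1 (I @ [x]) = nI 1 I" using c i2 by (simp add: nI_snoc)
  have ni: "nI k (I @ [x]) = nI k I + ind (k = i)" for k using c by (auto simp add: nI_snoc ind_def)
  have GG: "GG (I @ [x]) B' = GG I B"
  proof (cases "i = 100")
    case False
    have MM: "MM B' = MM B" unfolding MM_def app using False by simp
    have "sz (I @ [x]) = sz I" using c False by (simp add: sz_snoc)
    then show ?thesis unfolding GG_def using MM by simp
  next
    case True
    have xs: "x < 1/100" using cls_facts(2)[OF x] c True by simp
    have s': "s100 nb = x" unfolding s100_def using xs by simp
    have MM: "MM B' = MM B + x" unfolding MM_def app using True s' xs by simp
    have "sz (I @ [x]) = sz I + x" using c True by (simp add: sz_snoc)
    then show ?thesis unfolding GG_def using MM by simp
  qed
  have Sb: "beta_paper k * (NN k B' - 1) \<le> SS k B' \<and> SS k B' \<le> beta_paper k * NN k B' + 1"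
    if k: "2 \<le> k" "k \<le> 100" for k
  proof -
    have old: "beta_paper k * (NN k B - 1) \<le> SS k B" "SS k B \<le> beta_paper k * NN k B + 1"
      using G k unfolding GI_def by auto
    have br: "0 \<le> beta_paper k" "beta_paper k \<le> 1" using beta_range k by auto
    show ?thesis
    proof (cases "k = i")
      case False then show ?thesis using old NN SS by (simp add: ind_def)
    next
      case True
      have smd: "sm \<longleftrightarrow> SS i B \<le> beta_paper i * NN i B"
        unfolding sm_def SS_def NN_def sum_ind_len by simp
      show ?thesis
      proof (cases sm)
        case True
        then have "SS k B \<le> beta_paper k * NN k B" using smd \<open>k = i\<close> by simp
        then show ?thesis using old NN SS \<open>k = i\<close> True br by (simp add: algebra_simps)
      next
        case False
        then have "SS k B > beta_paper k * NN k B" using smd \<open>k = i\<close> by simp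
        then show ?thesis using old NN SS \<open>k = i\<close> False br by (simp add: algebra_simps)
      qed
    qed
  qed
  have GI': "GI (I @ [x]) B'"
  proof -
    have "AA k B' \<le> 1" if "2 \<le> k" "k \<le> 100" for k
      using AA[of k] A0 G that unfolding GI_def by (cases "k = i") (auto simp: ind_def)
    then show ?thesis
      using G setB' Sb UU ON LL CC n1 ni GG v unfolding GI_def by auto
  qed
  moreover have "TI (I @ [x]) B'"
  proof -
    obtain t where t: "t \<le> length I" "NN 1 B - GG I B * (100/99) \<le> WAl (take t I) - WBl (take t I) + 150"
      using T unfolding TI_def by blast
    have "take t (I @ [x]) = take t I" using t(1) by simp
    moreover have "NN 1 B' = NN 1 B" using NN[of 1] i2 by (simp add: ind_def)
    ultimately show ?thesis unfolding TI_def using t GG by (intro exI[of _ t]) auto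
  qed
  ultimately show ?thesis unfolding B'_def by simp
qed

lemma run_inv: "alg_run beta_paper I B \<Longrightarrow> valid_input I \<Longrightarrow> GI I B \<and> TI I B"
proof (induction rule: alg_run.induct)
  case run_nil
  then show ?case using beta_range
    by (auto simp: GI_def TI_def NN_def SS_def AA_def UU_def ONE1_def LL_def CC_def MM_def nI_def
        sz_def GG_def WAl_def WBl_def)
next
  case (run_snoc I B x B')
  have IH: "GI I B \<and> TI I B" using run_snoc valid_snoc by blast
  from run_snoc(2) show ?case
  proof cases
    case (class1_ready j) then show ?thesis using step_ready IH run_snoc(4) by blast
  next
    case (class1_pair j) then show ?thesis using step_pair IH run_snoc(4) by blast
  next
    case class1_new then show ?thesis using step_new1 IH run_snoc(4) by blast
  next
    case (classi_active i j) then show ?thesis using step_active IH run_snoc(4) by blast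
  next
    case (classi_new i) then show ?thesis using step_newi IH run_snoc(4) by blast
  qed
qed

lemma sum_if_one: "(\<Sum>b\<leftarrow>B. if bcls b = i then (1::real) else 0) = NN i B"
  by (induction B) (auto simp: NN_def ind_def)

lemma s100_ge0: "PB b \<Longrightarrow> 0 \<le> s100 b"
  unfolding PB_def s100_def by (intro sum_list_nonneg) auto

lemma alg_bound:
  assumes G: "GI I B" and T: "TI I B"
  shows "\<exists>t \<le> length I. real (length B) \<le> WAl (take t I) + WBl (drop t I) + 400"
proof -
  have v: "valid_input I" using G unfolding GI_def by simp
  have P: "\<And>b. b \<in> set B \<Longrightarrow> PB b" using G GI_PB by blast
  have "real (length B) = (\<Sum>b\<leftarrow>B. (1::real))" by (simp add: sum_one_len)
  also have "\<dots> = (\<Sum>i\<in>insert 1 (insert 100 {2..99}). \<Sum>b\<leftarrow>B. if bcls b = i then (1::real) else 0)"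
  proof (rule bin_decomp)
    show "\<forall>b\<in>set B. (1::real) \<noteq> 0 \<longrightarrow> bcls b \<in> insert 1 (insert 100 {2..99})"
      using P set_A unfolding PB_def by blast
  qed simp
  also have "\<dots> = NN 1 B + (NN 100 B + (\<Sum>i\<in>{2..99}. NN i B))"
    unfolding sum_if_one by simp
  finally have lenB: "real (length B) = NN 1 B + (NN 100 B + (\<Sum>i\<in>{2..99}. NN i B))" .
  have NNs: "(\<Sum>i\<in>{2..99}. NN i B) \<le> (\<Sum>i\<in>{2..99}. wBc i * nI i I) + 196"
  proof -
    have "(\<Sum>i\<in>{2..99}. NN i B) \<le> (\<Sum>i\<in>{2..99}. wBc i * nI i I + 2)"
      using perclass_alg[OF G] by (intro sum_mono) auto
    also have "\<dots> = (\<Sum>i\<in>{2..99}. wBc i * nI i I) + 196" by (simp add: sum.distrib)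
    finally show ?thesis .
  qed
  have M0: "(\<Sum>b\<leftarrow>B. 99/100 * ind (bcls b = 100) - 99/100 * ind (bcls b = 100 \<and> bactive b)) \<le> MM B"
    unfolding MM_def
  proof (rule sum_list_mono)
    fix b assume b: "b \<in> set B"
    then have Pb: "PB b" by (rule P)
    have s0: "0 \<le> s100 b" by (rule s100_ge0[OF Pb])
    show "99/100 * ind (bcls b = 100) - 99/100 * ind (bcls b = 100 \<and> bactive b)
        \<le> (if bcls b = 100 then min (s100 b) (99/100) else 0)"
      using Pb s0 unfolding PB_def by (cases "bactive b") (auto simp: ind_def)
  qed
  have M1: "99/100 * NN 100 B - 99/100 * AA 100 B \<le> MM B"
    using M0 unfolding sum_list_minus sum_list_cm NN_def AA_def .
  have A1: "AA 100 B \<le> 1" using GI_S[OF G, of 100] by simp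
  have WB: "WBl I = (\<Sum>i\<in>{2..99}. wBc i * nI i I) + 100/99 * sz I" by (rule wBsum[OF v])
  obtain t where t: "t \<le> length I" "NN 1 B - GG I B * (100/99) \<le> WAl (take t I) - WBl (take t I) + 150"
    using T unfolding TI_def by blast
  have split: "WBl I = WBl (take t I) + WBl (drop t I)"
    unfolding WBl_def by (metis append_take_drop_id map_append sum_list_append)
  have dist: "GG I B * (100/99) = sz I * (100/99) - MM B * (100/99)"
    unfolding GG_def by (rule left_diff_distrib)
  have "real (length B) \<le> WAl (take t I) + WBl (drop t I) + 400"
    using lenB NNs M1 A1 WB t(2) split dist by linarith
  then show ?thesis using t(1) by blast
qed

lemma wAc_le_wBc: "2 \<le> i \<Longrightarrow> i \<le> 100 \<Longrightarrow> wAc i \<le> wBc i"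
proof -
  assume i: "2 \<le> i" "i \<le> 100"
  have br: "0 \<le> beta_paper i" "beta_paper i \<le> 1" using beta_range i by auto
  then have d: "real i + 1 - beta_paper i > 0" using i by simp
  have "(1 - beta_paper i / 2) / (real i + 1 - beta_paper i) \<le> 1 / (real i + 1 - beta_paper i)"
    using br d by (intro divide_right_mono) auto
  then show ?thesis using i unfolding wAc_def wBc_def by simp
qed

lemma wBc_small_lin: "2 \<le> i \<Longrightarrow> i \<le> 11 \<Longrightarrow> wBc i \<le> 3 * (1 - 2 * Delta) / real (i + 1)"
proof -
  assume "2 \<le> i" "i \<le> 11"
  then have "i = 2 \<or> i = 3 \<or> i = 4 \<or> i = 5 \<or> i = 6 \<or> i = 7 \<or> i = 8 \<or> i = 9 \<or> i = 10 \<or> i = 11" using set11'[of i] by auto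
  then show ?thesis by (auto simp: wBc_def beta_paper_def theta_def Delta_def)
qed

lemma wBc_small_max: "2 \<le> i \<Longrightarrow> i \<le> 11 \<Longrightarrow> wBc i \<le> 1 - 2 * Delta"
proof -
  assume "2 \<le> i" "i \<le> 11"
  then have "i = 2 \<or> i = 3 \<or> i = 4 \<or> i = 5 \<or> i = 6 \<or> i = 7 \<or> i = 8 \<or> i = 9 \<or> i = 10 \<or> i = 11" using set11'[of i] by auto
  then show ?thesis by (auto simp: wBc_def beta_paper_def theta_def Delta_def)
qed

lemma item_w:
  assumes x: "0 < x" "x < 1"
  shows "wA x \<le> 1/2" "wB x \<le> 1 - 2 * Delta"
    "wA x \<le> 3 * (1 - 2 * Delta) * x" "wB x \<le> 3 * (1 - 2 * Delta) * x"
proof -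
  note P = item_class_props[OF x]
  define i where "i = item_class x"
  have D: "1 - 2 * Delta = 0.361162017994708" by (simp add: Delta_def)
  have "wA x \<le> 1/2 \<and> wB x \<le> 1 - 2 * Delta \<and> wA x \<le> 3 * (1 - 2 * Delta) * x \<and> wB x \<le> 3 * (1 - 2 * Delta) * x"
  proof (cases "i = 1")
    case True
    then have "1/2 \<le> x" using P unfolding i_def by auto
    then show ?thesis using True unfolding wA_def wB_def wAc_def wBc_def i_def[symmetric] D by auto
  next
    case i1: False
    show ?thesis
    proof (cases "i = 100")
      case True
      then have "x < 1/100" using P unfolding i_def by auto
      then show ?thesis using True unfolding wA_def wB_def i_def[symmetric] D using x by auto
    next
      case False
      have i2: "2 \<le> i" "i \<le> 99" using P i1 False unfolding i_def by auto
      have lo: "1 / real (i+1) \<le> x" using P i2 unfolding i_def by auto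
      have wa: "wA x = wAc i" "wB x = wBc i" using False unfolding wA_def wB_def i_def by auto
      have ab: "wAc i \<le> wBc i" using wAc_le_wBc i2 by simp
      have lin: "wBc i \<le> 3 * (1 - 2 * Delta) / real (i + 1)" and mx: "wBc i \<le> 1 - 2 * Delta"
      proof -
        have "wBc i \<le> 3 * (1 - 2 * Delta) / real (i + 1) \<and> wBc i \<le> 1 - 2 * Delta"
        proof (cases "i \<le> 11")
          case True then show ?thesis using wBc_small_lin wBc_small_max i2 by auto
        next
          case False
          then have "12 \<le> i" by simp
          then have w: "wBc i = 1 / real i" using wc_big i2 by simp
          have "1 / real i \<le> 13/12 / real (i + 1)" using \<open>12 \<le> i\<close> by (simp add: field_simps)
          moreover have "13/12 / real (i + 1) \<le> 3 * (1 - 2 * Delta) / real (i + 1)"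
            by (intro divide_right_mono) (auto simp: Delta_def)
          moreover have "1 / real i \<le> 1 - 2 * Delta" using \<open>12 \<le> i\<close> by (simp add: Delta_def field_simps)
          ultimately show ?thesis using w by simp
        qed
        then show "wBc i \<le> 3 * (1 - 2 * Delta) / real (i + 1)" "wBc i \<le> 1 - 2 * Delta" by auto
      qed
      have "3 * (1 - 2 * Delta) / real (i + 1) = 3 * (1 - 2 * Delta) * (1 / real (i+1))" by simp
      also have "\<dots> \<le> 3 * (1 - 2 * Delta) * x" using lo by (intro mult_left_mono) (auto simp: Delta_def)
      finally have "wBc i \<le> 3 * (1 - 2 * Delta) * x" using lin by linarith
      moreover have "wAc i \<le> 1/2" using ab mx by (simp add: Delta_def)
      ultimately show ?thesis using wa ab mx by linarith
    qed
  qed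
  then show "wA x \<le> 1/2" "wB x \<le> 1 - 2 * Delta"
    "wA x \<le> 3 * (1 - 2 * Delta) * x" "wB x \<le> 3 * (1 - 2 * Delta) * x" by auto
qed

lemma wsum_idx:
  "WAl (take t I) + WBl (drop t I) = (\<Sum>j<length I. if j < t then wA (I ! j) else wB (I ! j))"
proof (induction I rule: rev_induct)
  case Nil then show ?case by (simp add: WAl_def WBl_def)
next
  case (snoc x I)
  have s: "(\<Sum>j<length (I @ [x]). if j < t then wA ((I @ [x]) ! j) else wB ((I @ [x]) ! j))
      = (\<Sum>j<length I. if j < t then wA (I ! j) else wB (I ! j)) + (if length I < t then wA x else wB x)"
  proof -
    have c: "(\<Sum>j<length I. if j < t then wA ((I @ [x]) ! j) else wB ((I @ [x]) ! j))
        = (\<Sum>j<length I. if j < t then wA (I ! j) else wB (I ! j))"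
      by (intro sum.cong) (auto simp: nth_append)
    show ?thesis unfolding length_append_singleton sum.lessThan_Suc c by simp
  qed
  show ?case
  proof (cases "length I < t")
    case True
    then have "take t (I @ [x]) = I @ [x]" "drop t (I @ [x]) = []" "take t I = I" "drop t I = []" by auto
    then show ?thesis using snoc s True by (simp add: WAl_def WBl_def)
  next
    case False
    then have "take t (I @ [x]) = take t I" "drop t (I @ [x]) = drop t I @ [x]" by auto
    then show ?thesis using snoc s False by (simp add: WAl_def WBl_def)
  qed
qed

lemma group_bound:
  assumes v: "valid_input I" and vp: "valid_packing I f" and l: "l \<in> f ` {..<length I}"
  shows "(\<Sum>j\<in>{j \<in> {..<length I}. f j = l}. if j < t then wA (I ! j) else wB (I ! j)) \<le> 1.44465"
proof -
  define n where "n = length I"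
  define J where "J = {j \<in> {..<n}. f j = l}"
  define w where "w j = (if j < t then wA (I ! j) else wB (I ! j))" for j
  have fin: "finite J" unfolding J_def by simp
  have ne: "J \<noteq> {}" using l unfolding J_def n_def by auto
  define m where "m = Max J"
  have mJ: "m \<in> J" unfolding m_def using fin ne by simp
  have mmax: "\<And>j. j \<in> J \<Longrightarrow> j \<le> m" unfolding m_def using fin by simp
  have mn: "m < n" "f m = l" using mJ unfolding J_def by auto
  define J' where "J' = J - {m}"
  have J'eq: "J' = {k. k < m \<and> f k = f m}"
  proof
    show "J' \<subseteq> {k. k < m \<and> f k = f m}" using mmax mn unfolding J'_def J_def by fastforce
    show "{k. k < m \<and> f k = f m} \<subseteq> J'" using mn unfolding J'_def J_def by auto
  qed
  have finJ': "finite J'" using fin unfolding J'_def by simp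
  have inr: "\<And>j. j < n \<Longrightarrow> 0 < I ! j \<and> I ! j < 1" using v unfolding valid_input_def n_def by auto
  have J'n: "\<And>j. j \<in> J' \<Longrightarrow> j < m" using J'eq by auto
  have sum1: "(\<Sum>j\<in>J'. I ! j) < 1" using vp mn unfolding valid_packing_def J'eq n_def by auto
  have split: "(\<Sum>j\<in>J. w j) = w m + (\<Sum>j\<in>J'. w j)"
    unfolding J'_def using fin mJ by (simp add: sum.remove)
  have D: "4 * (1 - 2 * Delta) \<le> (1.44465::real)" by (simp add: Delta_def)
  show ?thesis
  proof (cases "m < t")
    case True
    have wA': "w j = wA (I ! j)" if "j \<in> J'" for j
    proof -
      have "j < t" using J'n[OF that] True by simp
      then show ?thesis unfolding w_def by simp
    qed
    define xs where "xs = map (\<lambda>j. I ! j) (sorted_list_of_set J')"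
    have xs1: "sum_list xs = (\<Sum>j\<in>J'. I ! j)"
      unfolding xs_def using finJ' by (simp add: sum_list_distinct_conv_sum_set)
    have xs2: "sum_list (map wA xs) = (\<Sum>j\<in>J'. wA (I ! j))"
      unfolding xs_def using finJ' by (simp add: sum_list_distinct_conv_sum_set comp_def)
    have xs3: "\<forall>x\<in>set xs. 0 < x \<and> x < 1"
    proof
      fix y assume "y \<in> set xs"
      then obtain j where j: "j \<in> J'" "y = I ! j" unfolding xs_def using finJ' by auto
      have "j < n" using J'n[OF j(1)] mn(1) by simp
      then show "0 < y \<and> y < 1" using inr j(2) by simp
    qed
    have "sum_list (map wA xs) \<le> 1.44465 - 1/2" using knap[OF xs3] xs1 sum1 by simp
    then have "(\<Sum>j\<in>J'. w j) \<le> 1.44465 - 1/2" using xs2 wA' by simp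
    moreover have "w m \<le> 1/2" using True item_w(1) inr mn unfolding w_def by auto
    ultimately show ?thesis using split unfolding J_def n_def w_def by simp
  next
    case False
    have "w m \<le> 1 - 2 * Delta" using False item_w(2) inr mn unfolding w_def by auto
    moreover have "(\<Sum>j\<in>J'. w j) \<le> (\<Sum>j\<in>J'. 3 * (1 - 2 * Delta) * (I ! j))"
    proof (rule sum_mono)
      fix j assume "j \<in> J'"
      then have "j < n" using J'n mn by fastforce
      then show "w j \<le> 3 * (1 - 2 * Delta) * (I ! j)" using item_w(3,4) inr unfolding w_def by auto
    qed
    moreover have "(\<Sum>j\<in>J'. 3 * (1 - 2 * Delta) * (I ! j)) \<le> 3 * (1 - 2 * Delta)"
    proof -
      have "(\<Sum>j\<in>J'. 3 * (1 - 2 * Delta) * (I ! j)) = 3 * (1 - 2 * Delta) * (\<Sum>j\<in>J'. I ! j)"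
        by (simp add: sum_distrib_left)
      also have "\<dots> \<le> 3 * (1 - 2 * Delta) * 1" using sum1 by (intro mult_left_mono) (auto simp: Delta_def)
      finally show ?thesis by simp
    qed
    ultimately show ?thesis using split D unfolding J_def n_def w_def by simp
  qed
qed

lemma opt_exists: "\<exists>g. valid_packing I g \<and> card (g ` {..<length I}) = OPT I"
proof -
  have "\<exists>m g. valid_packing I g \<and> card (g ` {..<length I}) = m"
  proof (intro exI[of _ "card (id ` {..<length I})"] exI[of _ id] conjI refl)
    have e: "\<And>j::nat. {k. k < j \<and> id k = id j} = {}" by auto
    show "valid_packing I id" unfolding valid_packing_def e by simp
  qed
  then show ?thesis unfolding OPT_def by (rule LeastI_ex)
qed

lemma opt_bound:
  assumes v: "valid_input I"
  shows "WAl (take t I) + WBl (drop t I) \<le> 1.44465 * real (OPT I)"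
proof -
  obtain g where g: "valid_packing I g" "card (g ` {..<length I}) = OPT I" using opt_exists by blast
  define w where "w j = (if j < t then wA (I ! j) else wB (I ! j))" for j
  have "WAl (take t I) + WBl (drop t I) = (\<Sum>j<length I. w j)" unfolding w_def by (rule wsum_idx)
  also have "\<dots> = (\<Sum>l\<in>g ` {..<length I}. \<Sum>j\<in>{j \<in> {..<length I}. g j = l}. w j)"
    by (rule sum.image_gen) simp
  also have "\<dots> \<le> (\<Sum>l\<in>g ` {..<length I}. 1.44465)"
    using group_bound[OF v g(1)] unfolding w_def by (intro sum_mono) auto
  also have "\<dots> = 1.44465 * real (OPT I)" using g(2) by simp
  finally show ?thesis .
qed

theorem mainTheorem6:
  shows "asymp_ratio beta_paper \<le> ereal 1.44465"
proof -
  define F where "F k = (SUP (I, B) \<in> {(I, B). valid_input I \<and> alg_run beta_paper I B \<and> OPT I \<ge> k}.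
                   ereal (real (length B) / real (OPT I)))" for k
  define g where "g k = ereal (1.44465 + 400 / real k)" for k :: nat
  have bnd: "F k \<le> g k" if k: "k \<ge> 1" for k
    unfolding F_def
  proof (rule SUP_least)
    fix p assume "p \<in> {(I, B). valid_input I \<and> alg_run beta_paper I B \<and> OPT I \<ge> k}"
    then obtain I B where p: "p = (I, B)" "valid_input I" "alg_run beta_paper I B" "OPT I \<ge> k" by auto
    have GT: "GI I B \<and> TI I B" using run_inv p by blast
    obtain t where t: "t \<le> length I" "real (length B) \<le> WAl (take t I) + WBl (drop t I) + 400"
      using alg_bound GT by blast
    have "real (length B) \<le> 1.44465 * real (OPT I) + 400" using t opt_bound[OF p(2), of t] by linarith
    moreover have pos: "real (OPT I) \<ge> real k" "real k \<ge> 1" using p k by auto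
    ultimately have "real (length B) / real (OPT I) \<le> 1.44465 + 400 / real (OPT I)"
      by (simp add: field_simps)
    also have "400 / real (OPT I) \<le> 400 / real k" using pos by (intro divide_left_mono) auto
    finally have "real (length B) / real (OPT I) \<le> 1.44465 + 400 / real k" by simp
    then show "(case p of (I, B) \<Rightarrow> ereal (real (length B) / real (OPT I))) \<le> g k"
      unfolding g_def p by simp
  qed
  have "asymp_ratio beta_paper = limsup F" unfolding asymp_ratio_def F_def ..
  also have "\<dots> \<le> limsup g"
    using bnd by (intro Limsup_mono) (auto simp: eventually_sequentially intro: exI[of _ 1])
  also have "limsup g = ereal 1.44465"
  proof (rule lim_imp_Limsup)
    show "\<not> trivial_limit (sequentially :: nat filter)" by simp
    have "(\<lambda>k. 1.44465 + 400 / real k) \<longlonglongrightarrow> 1.44465 + 0"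
      by (intro tendsto_add tendsto_const lim_const_over_n)
    then show "g \<longlonglongrightarrow> ereal 1.44465" unfolding g_def by simp
  qed
  finally show ?thesis .
qed

end
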